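(* The following hold: $$\mathrm{Tr}[Pe^{i\epsilon\mathcal P}]=\mathrm{tr}[\mathbb 1].$$ For all $t_1,t_2\in\{0,\dots,N-1\}$ and all $i,j\in\{1,\dots,L\}$, $$\mathrm{Tr}\big[Pe^{i\epsilon\mathcal P}a_{t_1i}a^\dagger_{t_2j}\big]=\begin{cases}\mathrm{tr}[a_ia_j^\dagger], & t_1\ge t_2,\\ -\mathrm{tr}[a_j^\dagger a_i], & t_1<t_2.\end{cases}$$ Moreover, for all $t_1,t_2,i,j$, $$\mathrm{Tr}\big[Pe^{i\epsilon\mathcal P}a_{t_1i}a_{t_2j}\big]=0,\qquad \mathrm{Tr}\big[Pe^{i\epsilon\mathcal P}a^\dagger_{t_1i}a^\dagger_{t_2j}\big]=0.$$
   Context: Fix integers $L\ge1$, $N\ge1$, a real $\epsilon>0$, and set $T=\epsilon N$. The space $h$. Let $h$ be the fermionic Fock space of $L$ modes ($\dim h=2^L$), with vacuum $|0\rangle$ and ladder operators $a_i$ satisfying $\{a_i,a_j^\dagger\}=\delta_{ij}$ and $\{a_i,a_j\}=\{a_i^\dagger,a_j^\dagger\}=0$. The symbol $\mathrm{tr}$ is the trace on $h$. The space $\mathcal H$. Let $\mathcal H$ ($\dim\mathcal H=2^{LN}$) be the Fock space generated from a vacuum $|\Omega\rangle$ by $a_{ti}$, $t=0,\dots,N-1$, $i=1,\dots,L$, with $\{a_{ti},a^\dagger_{t'j}\}=\delta_{tt'}\delta_{ij}$ and $\{a_{ti},a_{t'j}\}=\{a^\dagger_{ti},a^\dagger_{t'j}\}=0$.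 The symbol $\mathrm{Tr}$ is the trace on $\mathcal H$. Time translations and parity. Set $\omega_n=(2n+1)\pi/T$ and $\hat a_{ni}=N^{-1/2}\sum_{t=0}^{N-1}e^{i\omega_n\epsilon t}a_{ti}$ for $n=0,\dots,N-1$. Define $$\mathcal P=\sum_{n,j}\omega_n\hat a^\dagger_{nj}\hat a_{nj},\qquad P=\exp\Big(i\pi\sum_{t,i}a^\dagger_{ti}a_{ti}\Big)$$ (the parity operator). *)

theory Defs
  imports Complex_Main
begin

text \<open>Concrete fermionic Fock space of M modes (labelled 0..<M): orthonormal basis
  indexed by occupied-mode sets S \<subseteq> {..<M}. Operators are matrices
  nat set \<Rightarrow> nat set \<Rightarrow> complex (only entries on fock M matter).
  Ladder operators via the Jordan-Wigner construction.\<close>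

definition fock :: "nat \<Rightarrow> nat set set" where
  "fock M = Pow {..<M}"

type_synonym op = "nat set \<Rightarrow> nat set \<Rightarrow> complex"

definition mmul :: "nat \<Rightarrow> op \<Rightarrow> op \<Rightarrow> op" where
  "mmul M A B = (\<lambda>S T. \<Sum>U\<in>fock M. A S U * B U T)"

definition mid :: op where
  "mid = (\<lambda>S T. if S = T then 1 else 0)"

definition madd :: "op \<Rightarrow> op \<Rightarrow> op" where
  "madd A B = (\<lambda>S T. A S T + B S T)"

definition mscale :: "complex \<Rightarrow> op \<Rightarrow> op" where
  "mscale c A = (\<lambda>S T. c * A S T)"

definition msum :: "'a set \<Rightarrow> ('a \<Rightarrow> op) \<Rightarrow> op" where
  "msum I f = (\<lambda>S T. \<Sum>x\<in>I. f x S T)"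

definition madj :: "op \<Rightarrow> op" where
  "madj A = (\<lambda>S T. cnj (A T S))"

fun mpow :: "nat \<Rightarrow> op \<Rightarrow> nat \<Rightarrow> op" where
  "mpow M A 0 = mid"
| "mpow M A (Suc n) = mmul M (mpow M A n) A"

definition mexp :: "nat \<Rightarrow> op \<Rightarrow> op" where
  "mexp M A = (\<lambda>S T. \<Sum>n. mpow M A n S T / of_nat (fact n))"

definition mtr :: "nat \<Rightarrow> op \<Rightarrow> complex" where
  "mtr M A = (\<Sum>S\<in>fock M. A S S)"

definition ann :: "nat \<Rightarrow> op" where
  "ann k = (\<lambda>S T. if k \<in> T \<and> S = T - {k} then (-1) ^ card {m\<in>T. m < k} else 0)"

definition cre :: "nat \<Rightarrow> op" where
  "cre k = madj (ann k)"

text \<open>The small space h: L modes; a_i (i = 1..L) is mode i-1.\<close>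
definition a_h :: "nat \<Rightarrow> op" where
  "a_h i = ann (i - 1)"

text \<open>The big space H: L*N modes; a_{t i} (t<N, i=1..L) is mode t*L + (i-1).\<close>
definition a_H :: "nat \<Rightarrow> nat \<Rightarrow> nat \<Rightarrow> op" where
  "a_H L t i = ann (t * L + (i - 1))"

definition omega :: "nat \<Rightarrow> real \<Rightarrow> nat \<Rightarrow> real" where
  "omega N \<epsilon> n = (2 * real n + 1) * pi / (\<epsilon> * real N)"

definition ahat :: "nat \<Rightarrow> nat \<Rightarrow> real \<Rightarrow> nat \<Rightarrow> nat \<Rightarrow> op" where
  "ahat L N \<epsilon> n i = mscale (1 / complex_of_real (sqrt (real N)))
     (msum {..<N} (\<lambda>t. mscale (exp (\<i> * complex_of_real (omega N \<epsilon> n * \<epsilon> * real t))) (a_H L t i)))"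

definition Pcal :: "nat \<Rightarrow> nat \<Rightarrow> real \<Rightarrow> op" where
  "Pcal L N \<epsilon> = msum ({..<N} \<times> {1..L})
     (\<lambda>(n, j). mscale (complex_of_real (omega N \<epsilon> n))
        (mmul (L * N) (madj (ahat L N \<epsilon> n j)) (ahat L N \<epsilon> n j)))"

definition Npar :: "nat \<Rightarrow> nat \<Rightarrow> op" where
  "Npar L N = mexp (L * N) (mscale (\<i> * complex_of_real pi)
     (msum ({..<N} \<times> {1..L}) (\<lambda>(t, i). mmul (L * N) (madj (a_H L t i)) (a_H L t i))))"

definition PE :: "nat \<Rightarrow> nat \<Rightarrow> real \<Rightarrow> op" where
  "PE L N \<epsilon> = mmul (L * N) (Npar L N)
     (mexp (L * N) (mscale (\<i> * complex_of_real \<epsilon>) (Pcal L N \<epsilon>)))"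

end

theory Submission
  imports Defs "HOL-Computational_Algebra.Polynomial"
begin


definition jw :: "nat set \<Rightarrow> nat \<Rightarrow> complex" where
  "jw S k = (-1) ^ card {m\<in>S. m < k}"

definition annv :: "nat \<Rightarrow> (nat set \<Rightarrow> complex) \<Rightarrow> (nat set \<Rightarrow> complex)" where
  "annv k x = (\<lambda>S. if k \<notin> S then jw S k * x (insert k S) else 0)"

definition crev :: "nat \<Rightarrow> (nat set \<Rightarrow> complex) \<Rightarrow> (nat set \<Rightarrow> complex)" where
  "crev k x = (\<lambda>S. if k \<in> S then jw S k * x (S - {k}) else 0)"

definition app :: "nat \<Rightarrow> op \<Rightarrow> (nat set \<Rightarrow> complex) \<Rightarrow> (nat set \<Rightarrow> complex)" where
  "app M A x = (\<lambda>S. \<Sum>U\<in>fock M. A S U * x U)"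

definition ip :: "nat \<Rightarrow> (nat set \<Rightarrow> complex) \<Rightarrow> (nat set \<Rightarrow> complex) \<Rightarrow> complex" where
  "ip M x y = (\<Sum>S\<in>fock M. cnj (x S) * y S)"

definition vac :: "nat set \<Rightarrow> complex" where
  "vac = (\<lambda>S. if S = {} then 1 else 0)"

lemma finite_fock[simp]: "finite (fock M)"
  by (simp add: fock_def)

lemma fock_finite: "S \<in> fock M \<Longrightarrow> finite S"
  by (auto simp: fock_def intro: finite_subset)

lemma jw_sq[simp]: "jw S k * jw S k = 1"
  by (simp add: jw_def flip: power_add mult_2)

lemma jw_cnj[simp]: "cnj (jw S k) = jw S k"
  by (simp add: jw_def)

lemma jw_insert: "jw (insert a S) k = (if a < k \<and> a \<notin> S then - jw S k else jw S k)"
proof -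
  have fin: "finite {m\<in>S. m < k}" by (rule finite_subset[of _ "{..<k}"]) auto
  show ?thesis
  proof (cases "a < k \<and> a \<notin> S")
    case True
    then have "{m\<in>insert a S. m < k} = insert a {m\<in>S. m < k}" by auto
    then show ?thesis using True fin by (simp add: jw_def)
  next
    case False
    then have "{m\<in>insert a S. m < k} = {m\<in>S. m < k}" by auto
    then show ?thesis using False by (simp add: jw_def)
  qed
qed

lemma jw_remove: "jw (S - {a}) k = (if a < k \<and> a \<in> S then - jw S k else jw S k)"
proof (cases "a \<in> S")
  case True
  then have "S = insert a (S - {a})" by auto
  then have "jw S k = jw (insert a (S - {a})) k" by simp
  also have "\<dots> = (if a < k then - jw (S - {a}) k else jw (S - {a}) k)"
    by (subst jw_insert) simp
  finally have h: "jw S k = (if a < k then - jw (S - {a}) k else jw (S - {a}) k)" .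
  show ?thesis
  proof (cases "a < k")
    case True
    then show ?thesis using h \<open>a \<in> S\<close> by simp
  next
    case False
    then show ?thesis using h by simp
  qed
next
  case False
  then show ?thesis by simp
qed

lemma jw_insert_self[simp]: "jw (insert k S) k = jw S k"
  by (simp add: jw_insert)

lemma jw_remove_self[simp]: "jw (S - {k}) k = jw S k"
  by (simp add: jw_remove)

lemma car_ac:
  "annv k (crev l x) S + crev l (annv k x) S = (if k = l then x S else 0)"
proof (cases "k = l")
  case True
  then show ?thesis
    by (auto simp: annv_def crev_def insert_absorb mult.assoc[symmetric])
next
  case False
  have e1: "insert k S - {l} = insert k (S - {l})" using False by auto
  show ?thesis using False
    by (auto simp: annv_def crev_def jw_insert jw_remove e1 insert_absorb)
qed

lemma car_aa:
  "annv k (annv l x) S + annv l (annv k x) S = 0"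
proof (cases "k = l")
  case True
  then show ?thesis by (auto simp: annv_def)
next
  case False
  have e1: "insert k (insert l S) = insert l (insert k S)" by auto
  show ?thesis using False
    by (auto simp: annv_def jw_insert e1)
qed

lemma car_cc:
  "crev k (crev l x) S + crev l (crev k x) S = 0"
proof (cases "k = l")
  case True
  then show ?thesis by (auto simp: crev_def)
next
  case False
  have e1: "S - {k} - {l} = S - {l} - {k}" by auto
  show ?thesis using False
    by (auto simp: crev_def jw_remove e1)
qed

lemma annv_sum: "annv k (\<lambda>T. \<Sum>i\<in>I. f i T) S = (\<Sum>i\<in>I. annv k (f i) S)"
  by (simp add: annv_def sum_distrib_left)
lemma crev_sum: "crev k (\<lambda>T. \<Sum>i\<in>I. f i T) S = (\<Sum>i\<in>I. crev k (f i) S)"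
  by (simp add: crev_def sum_distrib_left)
lemma annv_scale: "annv k (\<lambda>T. c * f T) S = c * annv k f S"
  by (simp add: annv_def)
lemma crev_scale: "crev k (\<lambda>T. c * f T) S = c * crev k f S"
  by (simp add: crev_def)
lemma annv_add: "annv k (\<lambda>T. f T + g T) S = annv k f S + annv k g S"
  by (simp add: annv_def algebra_simps)
lemma crev_add: "crev k (\<lambda>T. f T + g T) S = crev k f S + crev k g S"
  by (simp add: crev_def algebra_simps)
lemma annv_zero[simp]: "annv k (\<lambda>T. 0) S = 0"
  by (simp add: annv_def)
lemma crev_zero[simp]: "crev k (\<lambda>T. 0) S = 0"
  by (simp add: crev_def)

lemma annv_vac[simp]: "annv k vac S = 0"
  by (simp add: annv_def vac_def)

lemma fock_insert: "S \<in> fock M \<Longrightarrow> k < M \<Longrightarrow> insert k S \<in> fock M"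
  by (auto simp: fock_def)
lemma fock_remove: "S \<in> fock M \<Longrightarrow> S - {k} \<in> fock M"
  by (auto simp: fock_def)

lemma ann_jw: "ann k S T = (if k \<in> T \<and> S = T - {k} then jw T k else 0)"
  by (simp add: ann_def jw_def)

lemma app_ann:
  assumes "k < M" "S \<in> fock M"
  shows "app M (ann k) x S = annv k x S"
proof (cases "k \<in> S")
  case True
  then show ?thesis by (auto simp: app_def ann_def annv_def intro!: sum.neutral)
next
  case False
  have "app M (ann k) x S = (\<Sum>U\<in>fock M. if U = insert k S then jw S k * x U else 0)"
    unfolding app_def ann_jw
    apply (rule sum.cong[OF refl])
    using False by (auto simp: insert_absorb)
  also have "\<dots> = jw S k * x (insert k S)"
    using fock_insert[OF assms(2,1)] by (simp add: sum.delta)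
  finally show ?thesis using False by (simp add: annv_def)
qed

lemma app_cre:
  assumes "S \<in> fock M"
  shows "app M (cre k) x S = crev k x S"
proof (cases "k \<in> S")
  case False
  then show ?thesis by (auto simp: app_def cre_def madj_def ann_def crev_def intro!: sum.neutral)
next
  case True
  have "app M (cre k) x S = (\<Sum>U\<in>fock M. if U = S - {k} then jw S k * x U else 0)"
    unfolding app_def cre_def madj_def ann_jw
    apply (rule sum.cong[OF refl])
    using True by auto
  also have "\<dots> = jw S k * x (S - {k})"
    using fock_remove[OF assms] by (simp add: sum.delta)
  finally show ?thesis using True by (simp add: crev_def)
qed

lemma ip_adj:
  assumes "k < M"
  shows "ip M x (annv k y) = ip M (crev k x) y"
proof -
  have "ip M x (annv k y) = (\<Sum>S\<in>{S\<in>fock M. k \<notin> S}. cnj (x S) * (jw S k * y (insert k S)))"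
    unfolding ip_def annv_def by (rule sum.mono_neutral_cong_right) auto
  also have "\<dots> = (\<Sum>T\<in>{T\<in>fock M. k \<in> T}. cnj (x (T - {k})) * (jw T k * y T))"
  proof (rule sum.reindex_bij_witness[where i="\<lambda>T. T - {k}" and j="\<lambda>S. insert k S"])
  qed (auto simp: fock_insert fock_remove assms insert_absorb)
  also have "\<dots> = ip M (crev k x) y"
    unfolding ip_def crev_def by (rule sum.mono_neutral_cong_left) auto
  finally show ?thesis .
qed

lemma ip_sum_right: "ip M x (\<lambda>T. \<Sum>i\<in>I. f i T) = (\<Sum>i\<in>I. ip M x (f i))"
  unfolding ip_def by (simp add: sum_distrib_left sum.swap[of _ "fock M"])
lemma ip_sum_left: "ip M (\<lambda>T. \<Sum>i\<in>I. f i T) y = (\<Sum>i\<in>I. ip M (f i) y)"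
  unfolding ip_def by (simp add: sum_distrib_right sum.swap[of _ "fock M"])
lemma ip_scale_right: "ip M x (\<lambda>T. c * f T) = c * ip M x f"
  unfolding ip_def by (simp add: sum_distrib_left algebra_simps)
lemma ip_scale_left: "ip M (\<lambda>T. c * f T) y = cnj c * ip M f y"
  unfolding ip_def by (simp add: sum_distrib_left algebra_simps)


lemma if01_mult: "(if P then 1 else 0) * (y::complex) = (if P then y else 0)"
  by simp

locale fermi =
  fixes M :: nat and W :: "nat \<Rightarrow> nat \<Rightarrow> complex"
  assumes rows: "m < M \<Longrightarrow> m' < M \<Longrightarrow> (\<Sum>k<M. W m k * cnj (W m' k)) = (if m = m' then 1 else 0)"
  and cols: "k < M \<Longrightarrow> k' < M \<Longrightarrow> (\<Sum>m<M. cnj (W m k) * W m k') = (if k = k' then 1 else 0)"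
begin

definition bv :: "nat \<Rightarrow> (nat set \<Rightarrow> complex) \<Rightarrow> (nat set \<Rightarrow> complex)" where
  "bv m x = (\<lambda>S. \<Sum>k<M. W m k * annv k x S)"

definition bcv :: "nat \<Rightarrow> (nat set \<Rightarrow> complex) \<Rightarrow> (nat set \<Rightarrow> complex)" where
  "bcv m x = (\<lambda>S. \<Sum>k<M. cnj (W m k) * crev k x S)"

lemma bv_sum: "bv m (\<lambda>T. \<Sum>i\<in>I. f i T) S = (\<Sum>i\<in>I. bv m (f i) S)"
  unfolding bv_def by (simp add: annv_sum sum_distrib_left) (rule sum.swap)
lemma bcv_sum: "bcv m (\<lambda>T. \<Sum>i\<in>I. f i T) S = (\<Sum>i\<in>I. bcv m (f i) S)"
  unfolding bcv_def by (simp add: crev_sum sum_distrib_left) (rule sum.swap)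
lemma bv_scale: "bv m (\<lambda>T. c * f T) S = c * bv m f S"
  by (simp add: bv_def annv_scale sum_distrib_left algebra_simps)
lemma bcv_scale: "bcv m (\<lambda>T. c * f T) S = c * bcv m f S"
  by (simp add: bcv_def crev_scale sum_distrib_left algebra_simps)
lemma bv_zero[simp]: "bv m (\<lambda>T. 0) S = 0"
  by (simp add: bv_def)
lemma bcv_zero[simp]: "bcv m (\<lambda>T. 0) S = 0"
  by (simp add: bcv_def)
lemma annv_diff: "annv k (\<lambda>T. f T - g T) S = annv k f S - annv k g S"
  by (simp add: annv_def algebra_simps)
lemma crev_diff: "crev k (\<lambda>T. f T - g T) S = crev k f S - crev k g S"
  by (simp add: crev_def algebra_simps)
lemma bv_diff: "bv m (\<lambda>T. f T - g T) S = bv m f S - bv m g S"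
  unfolding bv_def by (simp add: annv_diff right_diff_distrib sum_subtractf)
lemma bcv_diff: "bcv m (\<lambda>T. f T - g T) S = bcv m f S - bcv m g S"
  unfolding bcv_def by (simp add: crev_diff right_diff_distrib sum_subtractf)

lemma car_b:
  assumes "m < M" "m' < M"
  shows "bv m (bcv m' x) S + bcv m' (bv m x) S = (if m = m' then x S else 0)"
proof -
  have e1: "bv m (bcv m' x) S = (\<Sum>k<M. \<Sum>l<M. W m k * cnj (W m' l) * annv k (crev l x) S)"
    unfolding bv_def bcv_def by (simp add: annv_sum annv_scale sum_distrib_left mult.assoc)
  have "bcv m' (bv m x) S = (\<Sum>l<M. \<Sum>k<M. W m k * cnj (W m' l) * crev l (annv k x) S)"
    unfolding bv_def bcv_def by (simp add: crev_sum crev_scale sum_distrib_left mult.assoc mult.left_commute)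
  also have "\<dots> = (\<Sum>k<M. \<Sum>l<M. W m k * cnj (W m' l) * crev l (annv k x) S)"
    by (rule sum.swap)
  finally have e2: "bcv m' (bv m x) S = (\<Sum>k<M. \<Sum>l<M. W m k * cnj (W m' l) * crev l (annv k x) S)" .
  have "bv m (bcv m' x) S + bcv m' (bv m x) S
      = (\<Sum>k<M. \<Sum>l<M. W m k * cnj (W m' l) * (annv k (crev l x) S + crev l (annv k x) S))"
    unfolding e1 e2 by (simp add: sum.distrib[symmetric] distrib_left)
  also have "\<dots> = (\<Sum>k<M. W m k * cnj (W m' k) * x S)"
    by (simp add: car_ac if_distrib cong: if_cong)
  also have "\<dots> = (if m = m' then x S else 0)"
    using rows[OF assms] by (simp add: sum_distrib_right[symmetric])
  finally show ?thesis .
qed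

lemma anti_bb: "bv m (bv m' x) S + bv m' (bv m x) S = 0"
proof -
  have e1: "bv m (bv m' x) S = (\<Sum>k<M. \<Sum>l<M. W m k * W m' l * annv k (annv l x) S)"
    unfolding bv_def by (simp add: annv_sum annv_scale sum_distrib_left mult.assoc)
  have "bv m' (bv m x) S = (\<Sum>l<M. \<Sum>k<M. W m k * W m' l * annv l (annv k x) S)"
    unfolding bv_def by (simp add: annv_sum annv_scale sum_distrib_left mult.assoc mult.left_commute)
  also have "\<dots> = (\<Sum>k<M. \<Sum>l<M. W m k * W m' l * annv l (annv k x) S)"
    by (rule sum.swap)
  finally have e2: "bv m' (bv m x) S = (\<Sum>k<M. \<Sum>l<M. W m k * W m' l * annv l (annv k x) S)" .
  have "bv m (bv m' x) S + bv m' (bv m x) S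
      = (\<Sum>k<M. \<Sum>l<M. W m k * W m' l * (annv k (annv l x) S + annv l (annv k x) S))"
    unfolding e1 e2 by (simp add: sum.distrib[symmetric] distrib_left)
  also have "\<dots> = 0" by (simp add: car_aa)
  finally show ?thesis .
qed

lemma anti_cc: "bcv m (bcv m' x) S + bcv m' (bcv m x) S = 0"
proof -
  have e1: "bcv m (bcv m' x) S = (\<Sum>k<M. \<Sum>l<M. cnj (W m k) * cnj (W m' l) * crev k (crev l x) S)"
    unfolding bcv_def by (simp add: crev_sum crev_scale sum_distrib_left mult.assoc)
  have "bcv m' (bcv m x) S = (\<Sum>l<M. \<Sum>k<M. cnj (W m k) * cnj (W m' l) * crev l (crev k x) S)"
    unfolding bcv_def by (simp add: crev_sum crev_scale sum_distrib_left mult.assoc mult.left_commute)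
  also have "\<dots> = (\<Sum>k<M. \<Sum>l<M. cnj (W m k) * cnj (W m' l) * crev l (crev k x) S)"
    by (rule sum.swap)
  finally have e2: "bcv m' (bcv m x) S = (\<Sum>k<M. \<Sum>l<M. cnj (W m k) * cnj (W m' l) * crev l (crev k x) S)" .
  have "bcv m (bcv m' x) S + bcv m' (bcv m x) S
      = (\<Sum>k<M. \<Sum>l<M. cnj (W m k) * cnj (W m' l) * (crev k (crev l x) S + crev l (crev k x) S))"
    unfolding e1 e2 by (simp add: sum.distrib[symmetric] distrib_left)
  also have "\<dots> = 0" by (simp add: car_cc)
  finally show ?thesis .
qed

lemma bcv_bcv_same: "bcv m (bcv m x) S = 0"
  using anti_cc[of m m x S] by simp

lemma bv_vac: "bv m vac = (\<lambda>S. 0)"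
  by (simp add: bv_def fun_eq_iff)

lemma ip_bv: "ip M x (bv m y) = ip M (bcv m x) y"
proof -
  have "ip M x (bv m y) = (\<Sum>k<M. W m k * ip M x (annv k y))"
    unfolding bv_def by (simp add: ip_sum_right ip_scale_right)
  also have "\<dots> = (\<Sum>k<M. W m k * ip M (crev k x) y)"
    by (simp add: ip_adj)
  also have "\<dots> = ip M (bcv m x) y"
    unfolding bcv_def by (simp add: ip_sum_left ip_scale_left)
  finally show ?thesis .
qed

lemma ip_cnj: "ip M x y = cnj (ip M y x)"
  by (simp add: ip_def mult.commute)

lemma ip_bcv: "ip M x (bcv m y) = ip M (bv m x) y"
  by (metis ip_bv ip_cnj)

lemma annv_inv:
  assumes "k < M"
  shows "annv k x S = (\<Sum>m<M. cnj (W m k) * bv m x S)"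
proof -
  have "(\<Sum>m<M. cnj (W m k) * bv m x S) = (\<Sum>m<M. \<Sum>l<M. cnj (W m k) * W m l * annv l x S)"
    unfolding bv_def by (simp add: sum_distrib_left mult.assoc)
  also have "\<dots> = (\<Sum>l<M. \<Sum>m<M. cnj (W m k) * W m l * annv l x S)"
    by (rule sum.swap)
  also have "\<dots> = (\<Sum>l<M. (\<Sum>m<M. cnj (W m k) * W m l) * annv l x S)"
    by (simp add: sum_distrib_right)
  also have "\<dots> = annv k x S"
    using assms by (simp add: cols if01_mult)
  finally show ?thesis by simp
qed

lemma crev_inv:
  assumes "k < M"
  shows "crev k x S = (\<Sum>m<M. W m k * bcv m x S)"
proof -
  have c: "(\<Sum>m<M. W m k * cnj (W m l)) = (if k = l then 1 else 0)" if "l < M" for l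
  proof -
    have "(\<Sum>m<M. W m k * cnj (W m l)) = cnj (\<Sum>m<M. cnj (W m k) * W m l)"
      by (simp add: mult.commute)
    then show ?thesis using cols[OF assms that] by simp
  qed
  have "(\<Sum>m<M. W m k * bcv m x S) = (\<Sum>m<M. \<Sum>l<M. W m k * cnj (W m l) * crev l x S)"
    unfolding bcv_def by (simp add: sum_distrib_left mult.assoc)
  also have "\<dots> = (\<Sum>l<M. \<Sum>m<M. W m k * cnj (W m l) * crev l x S)"
    by (rule sum.swap)
  also have "\<dots> = (\<Sum>l<M. (\<Sum>m<M. W m k * cnj (W m l)) * crev l x S)"
    by (simp add: sum_distrib_right)
  also have "\<dots> = crev k x S"
    using assms by (simp add: c if01_mult)
  finally show ?thesis by simp
qed

primrec vec :: "nat list \<Rightarrow> (nat set \<Rightarrow> complex)" where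
  "vec [] = vac"
| "vec (m # ms) = bcv m (vec ms)"

lemma bv_bcv_fun:
  assumes "m < M" "m' < M"
  shows "bv m (bcv m' x) = (\<lambda>S. (if m = m' then x S else 0) - bcv m' (bv m x) S)"
  using car_b[OF assms] by (auto simp: fun_eq_iff algebra_simps)

lemma vec_bv:
  assumes "sorted_wrt (<) ns" "set ns \<subseteq> {..<M}" "m < M"
  shows "bv m (vec ns) S = (if m \<in> set ns then (-1) ^ length (filter (\<lambda>x. x < m) ns) * vec (remove1 m ns) S else 0)"
  using assms(1,2)
proof (induction ns arbitrary: S)
  case Nil
  then show ?case by (simp add: bv_vac)
next
  case (Cons n ns)
  have nM: "n < M" using Cons.prems by auto
  have IH: "bv m (vec ns) = (\<lambda>S. if m \<in> set ns then (-1) ^ length (filter (\<lambda>x. x < m) ns) * vec (remove1 m ns) S else 0)"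
    using Cons by auto
  show ?case
  proof (cases "m = n")
    case True
    then have "m \<notin> set ns" using Cons.prems by auto
    then have "bv m (vec ns) = (\<lambda>S. 0)" using IH by simp
    moreover have "filter (\<lambda>x. x < m) ns = []" using Cons.prems True by (auto simp: filter_empty_conv)
    ultimately show ?thesis using True by (simp add: bv_bcv_fun[OF nM nM])
  next
    case False
    have "bv m (vec (n # ns)) S = - bcv n (bv m (vec ns)) S"
      using False by (simp add: bv_bcv_fun[OF assms(3) nM])
    also have "\<dots> = (if m \<in> set ns then - ((-1) ^ length (filter (\<lambda>x. x < m) ns) * bcv n (vec (remove1 m ns)) S) else 0)"
      by (simp add: IH bcv_scale)
    also have "\<dots> = (if m \<in> set (n # ns) then (-1) ^ length (filter (\<lambda>x. x < m) (n # ns)) * vec (remove1 m (n # ns)) S else 0)"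
    proof (cases "m \<in> set ns")
      case True
      then have "n < m" using Cons.prems by auto
      then show ?thesis using True False by simp
    next
      case False
      then show ?thesis using \<open>m \<noteq> n\<close> by simp
    qed
    finally show ?thesis .
  qed
qed

lemma vec_bcv:
  assumes "sorted_wrt (<) ns" "set ns \<subseteq> {..<M}" "m < M"
  shows "bcv m (vec ns) S = (if m \<in> set ns then 0 else (-1) ^ length (filter (\<lambda>x. x < m) ns) * vec (insort m ns) S)"
  using assms(1,2)
proof (induction ns arbitrary: S)
  case Nil
  then show ?case by simp
next
  case (Cons n ns)
  have IH: "bcv m (vec ns) = (\<lambda>S. if m \<in> set ns then 0 else (-1) ^ length (filter (\<lambda>x. x < m) ns) * vec (insort m ns) S)"
    using Cons by auto
  consider "m = n" | "m < n" | "n < m" by linarith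
  then show ?case
  proof cases
    case 1
    then show ?thesis by (simp add: bcv_bcv_same)
  next
    case 2
    then have "m \<notin> set (n # ns)" "filter (\<lambda>x. x < m) (n # ns) = []"
      using Cons.prems by (auto simp: filter_empty_conv)
    then show ?thesis using 2 by simp
  next
    case 3
    have "bcv m (vec (n # ns)) S = - bcv n (bcv m (vec ns)) S"
      using anti_cc[of m n "vec ns" S] by (simp add: eq_neg_iff_add_eq_0)
    also have "\<dots> = (if m \<in> set ns then 0 else - ((-1) ^ length (filter (\<lambda>x. x < m) ns) * bcv n (vec (insort m ns)) S))"
      by (simp add: IH bcv_scale)
    also have "\<dots> = (if m \<in> set (n # ns) then 0 else (-1) ^ length (filter (\<lambda>x. x < m) (n # ns)) * vec (insort m (n # ns)) S)"
      using 3 by simp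
    finally show ?thesis .
  qed
qed

lemma vec_supp:
  assumes "finite S" "vec ms S \<noteq> 0"
  shows "card S = length ms"
  using assms
proof (induction ms arbitrary: S)
  case Nil
  then show ?case by (simp add: vac_def split: if_splits)
next
  case (Cons m ms)
  have "(\<Sum>k<M. cnj (W m k) * crev k (vec ms) S) \<noteq> 0"
    using Cons.prems(2) by (simp add: bcv_def)
  then obtain k where "cnj (W m k) * crev k (vec ms) S \<noteq> 0"
    by (meson sum.not_neutral_contains_not_neutral)
  then have "crev k (vec ms) S \<noteq> 0" by auto
  then have k: "k \<in> S" "vec ms (S - {k}) \<noteq> 0" by (auto simp: crev_def split: if_splits)
  then have "card (S - {k}) = length ms" using Cons by auto
  moreover have "card S > 0" using k Cons.prems(1) card_gt_0_iff by blast
  ultimately show ?case using k Cons.prems by (simp add: card_Diff_singleton_if)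
qed

definition v :: "nat set \<Rightarrow> (nat set \<Rightarrow> complex)" where
  "v A = vec (sorted_list_of_set A)"

lemma filter_card:
  "finite A \<Longrightarrow> length (filter (\<lambda>x. x < m) (sorted_list_of_set A)) = card {x\<in>A. x < m}"
  by (simp add: distinct_length_filter Int_def conj_commute)

lemma fock_sub: "A \<in> fock M \<Longrightarrow> A \<subseteq> {..<M}"
  by (simp add: fock_def)

lemma v_bv:
  assumes "A \<in> fock M" "m < M"
  shows "bv m (v A) S = (if m \<in> A then (-1) ^ card {x\<in>A. x < m} * v (A - {m}) S else 0)"
proof -
  have f: "finite A" using assms fock_finite by auto
  show ?thesis
    unfolding v_def
    using vec_bv[of "sorted_list_of_set A" m S] f assms fock_sub[OF assms(1)]
    by (simp add: filter_card sorted_list_of_set_remove)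
qed

lemma v_bcv:
  assumes "A \<in> fock M" "m < M"
  shows "bcv m (v A) S = (if m \<in> A then 0 else (-1) ^ card {x\<in>A. x < m} * v (insert m A) S)"
proof -
  have f: "finite A" using assms fock_finite by auto
  show ?thesis
    unfolding v_def
    using vec_bcv[of "sorted_list_of_set A" m S] f assms fock_sub[OF assms(1)]
    by (simp add: filter_card sorted_list_of_set_insert)
qed

lemma v_num:
  assumes "A \<in> fock M" "m < M"
  shows "bcv m (bv m (v A)) S = (if m \<in> A then v A S else 0)"
proof (cases "m \<in> A")
  case True
  have A': "A - {m} \<in> fock M" using assms by (simp add: fock_remove)
  have "bv m (v A) = (\<lambda>S. (-1) ^ card {x\<in>A. x < m} * v (A - {m}) S)"
    using v_bv[OF assms] True by auto
  then have "bcv m (bv m (v A)) S = (-1) ^ card {x\<in>A. x < m} * bcv m (v (A - {m})) S"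
    by (simp add: bcv_scale)
  also have "\<dots> = (-1) ^ card {x\<in>A. x < m} * (-1) ^ card {x\<in>A - {m}. x < m} * v A S"
    using v_bcv[OF A' assms(2)] True by (simp add: insert_absorb)
  also have "{x\<in>A - {m}. x < m} = {x\<in>A. x < m}" by auto
  finally show ?thesis using True by (simp flip: power_add mult_2)
next
  case False
  then have "bv m (v A) = (\<lambda>S. 0)" using v_bv[OF assms] by auto
  then show ?thesis using False by simp
qed

lemma v_supp:
  assumes "finite S" "v A S \<noteq> 0" "finite A"
  shows "card S = card A"
  using vec_supp[OF assms(1)] assms(2,3) unfolding v_def by simp

lemma v_empty: "v {} = vac"
  by (simp add: v_def)

lemma v_nonempty:
  assumes "finite A" "A \<noteq> {}"
  shows "v A = bcv (Min A) (v (A - {Min A}))"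
  using sorted_list_of_set_nonempty[OF assms] by (simp add: v_def)

lemma ip_vac_vac: "ip M vac vac = 1"
proof -
  have "ip M vac vac = (\<Sum>S\<in>fock M. if S = {} then 1 else 0)"
    unfolding ip_def vac_def by (rule sum.cong) auto
  also have "\<dots> = 1" by (simp add: fock_def)
  finally show ?thesis .
qed

lemma v_ortho:
  assumes "A \<in> fock M" "B \<in> fock M"
  shows "ip M (v A) (v B) = (if A = B then 1 else 0)"
  using assms
proof (induction "card A" arbitrary: A B rule: less_induct)
  case less
  have fA: "finite A" "finite B" using less.prems fock_finite by auto
  show ?case
  proof (cases "A = {}")
    case True
    show ?thesis
    proof (cases "B = {}")
      case True
      then show ?thesis using \<open>A = {}\<close> by (simp add: v_empty ip_vac_vac)
    next
      case False
      have "ip M (v A) (v B) = ip M (bv (Min B) vac) (v (B - {Min B}))"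
        using \<open>A = {}\<close> v_nonempty[OF fA(2) False] by (simp add: v_empty ip_bcv)
      also have "\<dots> = 0" by (simp add: bv_vac ip_def)
      finally show ?thesis using False True by simp
    qed
  next
    case False
    define m where "m = Min A"
    have mA: "m \<in> A" using False fA m_def by simp
    have mM: "m < M" using mA less.prems fock_sub by auto
    have A': "A - {m} \<in> fock M" using less.prems fock_remove by auto
    have cA: "card (A - {m}) < card A" by (rule card_Diff1_less[OF fA(1) mA])
    have "ip M (v A) (v B) = ip M (v (A - {m})) (bv m (v B))"
      using v_nonempty[OF fA(1) False] by (simp add: m_def ip_bv)
    also have "\<dots> = (if m \<in> B then (-1) ^ card {x\<in>B. x < m} * ip M (v (A - {m})) (v (B - {m})) else 0)"
      using v_bv[OF less.prems(2) mM] by (auto simp: ip_def sum_distrib_left mult.left_commute)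
    also have "\<dots> = (if A = B then 1 else 0)"
    proof (cases "m \<in> B")
      case True
      have B': "B - {m} \<in> fock M" using less.prems fock_remove by auto
      have IH: "ip M (v (A - {m})) (v (B - {m})) = (if A - {m} = B - {m} then 1 else 0)"
        using less.hyps[OF cA A' B'] .
      have eq: "(A - {m} = B - {m}) = (A = B)" using mA True by blast
      have s1: "(-1::complex) ^ card {x\<in>B. x < m} = 1" if "A = B"
      proof -
        have "{x\<in>B. x < m} = {}" using that fA m_def Min_le[OF fA(2)] by fastforce
        then show ?thesis by (simp only: card.empty power_0)
      qed
      show ?thesis using True IH eq s1 by auto
    next
      case False
      then show ?thesis using mA by auto
    qed
    finally show ?thesis .
  qed
qed

definition es :: "nat set \<Rightarrow> (nat set \<Rightarrow> complex)" where
  "es S = (\<lambda>T. if T = S then 1 else 0)"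

definition espan :: "(nat set \<Rightarrow> complex) \<Rightarrow> bool" where
  "espan x \<longleftrightarrow> (\<exists>c. \<forall>T. x T = (\<Sum>A\<in>fock M. c A * v A T))"

lemma espan_v: "A \<in> fock M \<Longrightarrow> espan (v A)"
  unfolding espan_def
  by (rule exI[of _ "\<lambda>B. if B = A then 1 else 0"]) (simp add: if01_mult)

lemma espan_zero: "espan (\<lambda>T. 0)"
  unfolding espan_def by (rule exI[of _ "\<lambda>B. 0"]) simp

lemma espan_scale: "espan x \<Longrightarrow> espan (\<lambda>T. a * x T)"
  unfolding espan_def
  apply clarify
  subgoal for c by (rule exI[of _ "\<lambda>B. a * c B"]) (simp add: sum_distrib_left algebra_simps)
  done

lemma espan_add: "espan x \<Longrightarrow> espan y \<Longrightarrow> espan (\<lambda>T. x T + y T)"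
  unfolding espan_def
  apply clarify
  subgoal for c d by (rule exI[of _ "\<lambda>B. c B + d B"]) (simp add: sum.distrib algebra_simps)
  done

lemma espan_sum: "finite I \<Longrightarrow> (\<And>i. i \<in> I \<Longrightarrow> espan (f i)) \<Longrightarrow> espan (\<lambda>T. \<Sum>i\<in>I. f i T)"
proof (induction I rule: finite_induct)
  case empty
  then show ?case by (simp add: espan_zero)
next
  case (insert a I)
  then show ?case using espan_add[of "f a" "\<lambda>T. \<Sum>i\<in>I. f i T"] by simp
qed

lemma espan_ext: "espan x \<Longrightarrow> (\<And>T. y T = x T) \<Longrightarrow> espan y"
proof -
  assume "espan x" "\<And>T. y T = x T"
  then have "y = x" by auto
  then show "espan y" using \<open>espan x\<close> by simp
qed

lemma espan_crev:
  assumes "espan x" "k < M"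
  shows "espan (crev k x)"
proof -
  obtain c where c: "\<And>T. x T = (\<Sum>A\<in>fock M. c A * v A T)" using assms unfolding espan_def by auto
  have x: "x = (\<lambda>T. \<Sum>A\<in>fock M. c A * v A T)" using c by auto
  have h1: "crev k x T = (\<Sum>A\<in>fock M. \<Sum>m<M. c A * W m k * bcv m (v A) T)" for T
    unfolding x by (simp add: crev_sum crev_scale crev_inv[OF assms(2)] sum_distrib_left algebra_simps)
  have h2: "espan (\<lambda>T. \<Sum>A\<in>fock M. \<Sum>m<M. c A * W m k * bcv m (v A) T)"
  proof (intro espan_sum)
    fix A m assume A: "A \<in> fock M" and m: "m \<in> {..<M}"
    then have mM: "m < M" by simp
    show "espan (\<lambda>T. c A * W m k * bcv m (v A) T)"
    proof (cases "m \<in> A")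
      case True
      then show ?thesis using v_bcv[OF A mM] by (simp add: espan_zero)
    next
      case False
      have "espan (\<lambda>T. (c A * W m k * (-1) ^ card {x\<in>A. x < m}) * v (insert m A) T)"
        by (intro espan_scale espan_v fock_insert A mM)
      then show ?thesis by (rule espan_ext) (simp add: v_bcv[OF A mM] False)
    qed
  qed auto
  show ?thesis by (rule espan_ext[OF h2]) (rule h1)
qed

lemma es_rec:
  assumes "finite S" "S \<noteq> {}"
  shows "es S = crev (Min S) (es (S - {Min S}))"
proof
  fix T
  have j: "jw S (Min S) = 1"
  proof -
    have "{m\<in>S. m < Min S} = {}" using assms by auto
    then have "card {m\<in>S. m < Min S} = 0" by (simp only: card.empty)
    then show ?thesis by (simp only: jw_def power_0)
  qed
  have "Min S \<in> S" using assms by simp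
  then show "es S T = crev (Min S) (es (S - {Min S})) T"
    unfolding es_def crev_def using j by auto
qed

lemma es_empty: "es {} = vac"
  by (simp add: es_def vac_def fun_eq_iff)

lemma espan_es:
  assumes "S \<in> fock M"
  shows "espan (es S)"
  using assms
proof (induction "card S" arbitrary: S rule: less_induct)
  case less
  have f: "finite S" using less.prems fock_finite by auto
  show ?case
  proof (cases "S = {}")
    case True
    then show ?thesis using espan_v[of "{}"] by (simp add: es_empty v_empty fock_def)
  next
    case False
    have m: "Min S \<in> S" using f False by simp
    have "espan (es (S - {Min S}))"
      using less.hyps[OF card_Diff1_less[OF f m]] less.prems by (simp add: fock_remove)
    moreover have "Min S < M" using m less.prems fock_sub by auto
    ultimately show ?thesis using es_rec[OF f False] espan_crev by simp
  qed
qed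

lemma complete:
  assumes "S \<in> fock M" "T \<in> fock M"
  shows "(\<Sum>A\<in>fock M. v A T * cnj (v A S)) = (if T = S then 1 else 0)"
proof -
  obtain c where c: "\<And>T. es S T = (\<Sum>A\<in>fock M. c A * v A T)"
    using espan_es[OF assms(1)] unfolding espan_def by auto
  have cB: "c B = cnj (v B S)" if B: "B \<in> fock M" for B
  proof -
    have "ip M (v B) (es S) = cnj (v B S)"
      unfolding ip_def es_def using assms(1) by (simp add: if_distrib cong: if_cong)
    moreover have "ip M (v B) (es S) = (\<Sum>A\<in>fock M. c A * ip M (v B) (v A))"
    proof -
      have "es S = (\<lambda>T. \<Sum>A\<in>fock M. c A * v A T)" using c by auto
      then show ?thesis by (simp add: ip_sum_right ip_scale_right)
    qed
    moreover have "(\<Sum>A\<in>fock M. c A * ip M (v B) (v A)) = c B"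
      using B by (simp add: v_ortho if_distrib eq_commute cong: if_cong)
    ultimately show ?thesis by simp
  qed
  have "es S T = (\<Sum>A\<in>fock M. v A T * cnj (v A S))"
    using c[of T] by (simp add: cB mult.commute cong: sum.cong)
  then show ?thesis by (simp add: es_def)
qed

end


lemma mmul_assoc: "mmul M (mmul M A B) C = mmul M A (mmul M B C)"
proof (intro ext)
  fix S T
  have "mmul M (mmul M A B) C S T = (\<Sum>U\<in>fock M. \<Sum>V\<in>fock M. A S V * B V U * C U T)"
    by (simp add: mmul_def sum_distrib_right)
  also have "\<dots> = (\<Sum>V\<in>fock M. \<Sum>U\<in>fock M. A S V * B V U * C U T)"
    by (rule sum.swap)
  also have "\<dots> = mmul M A (mmul M B C) S T"
    by (simp add: mmul_def sum_distrib_left mult.assoc)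
  finally show "mmul M (mmul M A B) C S T = mmul M A (mmul M B C) S T" .
qed

lemma app_mmul: "app M (mmul M A B) x S = app M A (app M B x) S"
proof -
  have "app M (mmul M A B) x S = (\<Sum>U\<in>fock M. \<Sum>V\<in>fock M. A S V * B V U * x U)"
    by (simp add: app_def mmul_def sum_distrib_right)
  also have "\<dots> = (\<Sum>V\<in>fock M. \<Sum>U\<in>fock M. A S V * B V U * x U)"
    by (rule sum.swap)
  also have "\<dots> = app M A (app M B x) S"
    by (simp add: app_def sum_distrib_left mult.assoc)
  finally show ?thesis .
qed

lemma mexp_spectral:
  fixes v :: "'i \<Rightarrow> nat set \<Rightarrow> complex" and I :: "'i set" and \<beta> :: "'i \<Rightarrow> complex"
  assumes fin: "finite I"
  and orth: "\<And>a b. a \<in> I \<Longrightarrow> b \<in> I \<Longrightarrow> (\<Sum>S\<in>fock M. cnj (v a S) * v b S) = (if a = b then 1 else 0)"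
  and compl: "\<And>S T. S \<in> fock M \<Longrightarrow> T \<in> fock M \<Longrightarrow> (\<Sum>a\<in>I. v a S * cnj (v a T)) = (if S = T then 1 else 0)"
  and eig: "\<And>a S. a \<in> I \<Longrightarrow> S \<in> fock M \<Longrightarrow> (\<Sum>U\<in>fock M. B S U * v a U) = \<beta> a * v a S"
  and S: "S \<in> fock M" and T: "T \<in> fock M"
  shows "mexp M B S T = (\<Sum>a\<in>I. v a S * exp (\<beta> a) * cnj (v a T))"
proof -
  have spec: "B S T = (\<Sum>a\<in>I. \<beta> a * v a S * cnj (v a T))" if "S \<in> fock M" "T \<in> fock M" for S T
  proof -
    have "B S T = (\<Sum>U\<in>fock M. B S U * (if U = T then 1 else 0))"
      using that by (simp add: if01_mult[simplified mult.commute] sum.delta)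
    also have "\<dots> = (\<Sum>U\<in>fock M. B S U * (\<Sum>a\<in>I. v a U * cnj (v a T)))"
      using that by (intro sum.cong refl) (simp add: compl)
    also have "\<dots> = (\<Sum>U\<in>fock M. \<Sum>a\<in>I. B S U * v a U * cnj (v a T))"
      by (simp add: sum_distrib_left mult.assoc)
    also have "\<dots> = (\<Sum>a\<in>I. \<Sum>U\<in>fock M. B S U * v a U * cnj (v a T))"
      by (rule sum.swap)
    also have "\<dots> = (\<Sum>a\<in>I. (\<Sum>U\<in>fock M. B S U * v a U) * cnj (v a T))"
      by (simp add: sum_distrib_right)
    also have "\<dots> = (\<Sum>a\<in>I. \<beta> a * v a S * cnj (v a T))"
      using that by (simp add: eig)
    finally show ?thesis .
  qed
  have pow: "mpow M B n S T = (\<Sum>a\<in>I. \<beta> a ^ n * v a S * cnj (v a T))" if "S \<in> fock M" "T \<in> fock M" for n S T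
    using that
  proof (induction n arbitrary: T)
    case 0
    then show ?case using compl[OF 0] by (simp add: mid_def)
  next
    case (Suc n)
    have "mpow M B (Suc n) S T = (\<Sum>U\<in>fock M. (\<Sum>a\<in>I. \<beta> a ^ n * v a S * cnj (v a U)) * (\<Sum>b\<in>I. \<beta> b * v b U * cnj (v b T)))"
      using Suc by (simp add: mmul_def spec)
    also have "\<dots> = (\<Sum>U\<in>fock M. \<Sum>a\<in>I. \<Sum>b\<in>I. (\<beta> a ^ n * v a S * \<beta> b * cnj (v b T)) * (cnj (v a U) * v b U))"
      by (simp add: sum_distrib_left sum_distrib_right algebra_simps)
    also have "\<dots> = (\<Sum>a\<in>I. \<Sum>b\<in>I. \<Sum>U\<in>fock M. (\<beta> a ^ n * v a S * \<beta> b * cnj (v b T)) * (cnj (v a U) * v b U))"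
      by (simp add: sum.swap[of _ "fock M"])
    also have "\<dots> = (\<Sum>a\<in>I. \<Sum>b\<in>I. (\<beta> a ^ n * v a S * \<beta> b * cnj (v b T)) * (if a = b then 1 else 0))"
      by (simp add: sum_distrib_left[symmetric] orth)
    also have "\<dots> = (\<Sum>a\<in>I. \<beta> a ^ n * v a S * \<beta> a * cnj (v a T))"
    proof (intro sum.cong refl)
      fix a assume "a \<in> I"
      then show "(\<Sum>b\<in>I. (\<beta> a ^ n * v a S * \<beta> b * cnj (v b T)) * (if a = b then 1 else 0)) = \<beta> a ^ n * v a S * \<beta> a * cnj (v a T)"
        using fin by (simp add: if01_mult[simplified mult.commute] sum.delta)
    qed
    also have "\<dots> = (\<Sum>a\<in>I. \<beta> a ^ Suc n * v a S * cnj (v a T))"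
      by (simp add: algebra_simps)
    finally show ?case .
  qed
  have "(\<lambda>n. mpow M B n S T / of_nat (fact n)) sums (\<Sum>a\<in>I. v a S * exp (\<beta> a) * cnj (v a T))"
  proof -
    have "(\<lambda>n. \<Sum>a\<in>I. (v a S * cnj (v a T)) * (\<beta> a ^ n /\<^sub>R fact n)) sums (\<Sum>a\<in>I. (v a S * cnj (v a T)) * exp (\<beta> a))"
      by (intro sums_sum sums_mult exp_converges)
    moreover have "(\<lambda>n. \<Sum>a\<in>I. (v a S * cnj (v a T)) * (\<beta> a ^ n /\<^sub>R fact n)) = (\<lambda>n. mpow M B n S T / of_nat (fact n))"
      by (simp add: pow[OF S T] sum_divide_distrib scaleR_conv_of_real divide_inverse sum_distrib_left algebra_simps)
    ultimately show ?thesis by (simp add: algebra_simps)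
  qed
  then show ?thesis unfolding mexp_def by (simp add: sums_unique[symmetric])
qed


definition th :: "nat \<Rightarrow> nat \<Rightarrow> real" where
  "th N n = (2 * real n + 1) * pi / real N"

lemma cis_eq_1: "cis a = 1 \<longleftrightarrow> (\<exists>n::int. a = 2 * pi * real_of_int n)"
proof
  assume "cis a = 1"
  then have "cos a = 1" by (simp add: complex_eq_iff)
  then obtain n :: int where "a = real_of_int n * 2 * pi" using cos_one_2pi_int by blast
  then show "\<exists>n::int. a = 2 * pi * real_of_int n" by (intro exI[of _ n]) simp
next
  assume "\<exists>n::int. a = 2 * pi * real_of_int n"
  then obtain n :: int where "a = 2 * pi * real_of_int n" by blast
  then show "cis a = 1" by simp
qed

lemma geo_int:
  assumes N: "N > 0"
  shows "(\<Sum>n<N. cis (2 * pi * real_of_int e * real n / real N)) = (if int N dvd e then of_nat N else 0)"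
proof -
  define q where "q = cis (2 * pi * real_of_int e / real N)"
  have qn: "cis (2 * pi * real_of_int e * real n / real N) = q ^ n" for n
    unfolding q_def DeMoivre by (simp add: field_simps)
  have qN: "q ^ N = 1"
  proof -
    have "q ^ N = cis (2 * pi * real_of_int e)" unfolding q_def DeMoivre using N by (simp add: field_simps)
    also have "\<dots> = 1" by simp
    finally show ?thesis .
  qed
  show ?thesis
  proof (cases "int N dvd e")
    case True
    then obtain c where c: "e = int N * c" by (auto simp: dvd_def)
    have "q = cis (2 * pi * real_of_int c)" unfolding q_def c using N by (simp add: field_simps)
    then have "q = 1" by simp
    then show ?thesis using True by (simp add: qn)
  next
    case False
    have "q \<noteq> 1"
    proof
      assume "q = 1"
      then obtain n :: int where n: "2 * pi * real_of_int e / real N = 2 * pi * real_of_int n"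
        unfolding q_def cis_eq_1 by blast
      then have "real_of_int e = real_of_int n * real N" using N by (simp add: field_simps)
      then have "e = n * int N" by (metis of_int_eq_iff of_int_mult of_int_of_nat_eq)
      then show False using False by simp
    qed
    then have "(\<Sum>n<N. q ^ n) = 0" using qN by (simp add: sum_gp_strict)
    then show ?thesis using False by (simp add: qn)
  qed
qed

lemma G2:
  assumes N: "N > 0"
  shows "(\<Sum>n<N. cis (th N n * real_of_int e)) = (if int N dvd e then of_nat N * cis (pi * real_of_int e / real N) else 0)"
proof -
  have RN: "real N > 0" using N by simp
  have "cis (th N n * real_of_int e) = cis (pi * real_of_int e / real N) * cis (2 * pi * real_of_int e * real n / real N)" for n
    unfolding cis_mult th_def using RN by (intro arg_cong[where f=cis]) (simp add: field_simps)
  then have "(\<Sum>n<N. cis (th N n * real_of_int e)) = cis (pi * real_of_int e / real N) * (\<Sum>n<N. cis (2 * pi * real_of_int e * real n / real N))"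
    by (simp add: sum_distrib_left)
  then show ?thesis using geo_int[OF N, of e] by simp
qed

lemma z_pow_N:
  assumes N: "N > 0"
  shows "cis (th N n) ^ N = -1"
proof -
  have RN: "real N \<noteq> 0" using N by simp
  have "real N * ((2 * real n + 1) * pi / real N) = 2 * pi * real n + pi"
    using RN by (simp add: field_simps)
  then have "cis (th N n) ^ N = cis (2 * pi * real n + pi)"
    unfolding DeMoivre th_def by simp
  also have "\<dots> = cis (2 * pi * real n) * cis pi" by (simp only: cis_mult)
  also have "\<dots> = -1" by simp
  finally show ?thesis .
qed

lemma z_ne_1:
  assumes N: "N > 0"
  shows "1 - cis (th N n) \<noteq> 0"
proof
  assume "1 - cis (th N n) = 0"
  then have "cis (th N n) = 1" by simp
  then have "cis (th N n) ^ N = 1" by simp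
  then show False using z_pow_N[OF N, of n] by simp
qed

lemma z_inj:
  assumes N: "N > 0" and a: "a < N" and b: "b < N" and eq: "cis (th N a) = cis (th N b)"
  shows "a = b"
proof -
  have "cis (th N a - th N b) = 1" using eq by (simp add: cis_divide[symmetric])
  then obtain n :: int where n: "th N a - th N b = 2 * pi * real_of_int n" unfolding cis_eq_1 by blast
  have RN: "real N \<noteq> 0" using N by simp
  have "th N a - th N b = (real a - real b) * (2 * pi / real N)"
    unfolding th_def using RN by (simp add: field_simps)
  then have "(real a - real b) * (2 * pi / real N) = 2 * pi * real_of_int n" using n by simp
  then have h: "(real a - real b) * (2 * pi / real N) = 2 * pi * real_of_int n" .
  have "real a - real b = ((real a - real b) * (2 * pi / real N)) * (real N / (2 * pi))"
    using RN by (simp add: field_simps)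
  also have "\<dots> = 2 * pi * real_of_int n * (real N / (2 * pi))" using h by simp
  also have "\<dots> = n * real N" by (simp add: field_simps)
  finally have "real a - real b = n * real N" .
  then have "int a - int b = n * int N" by (metis of_int_eq_iff of_int_mult of_int_of_nat_eq of_int_diff)
  moreover have "\<bar>int a - int b\<bar> < int N" using a b by simp
  ultimately have "\<bar>n\<bar> * int N < 1 * int N" by (simp add: abs_mult)
  then have "\<bar>n\<bar> < 1" by (rule mult_right_less_imp_less) simp
  then have "n = 0" by simp
  then show ?thesis using \<open>int a - int b = n * int N\<close> by simp
qed

lemma prod_z:
  assumes N: "N > 0"
  shows "(\<Prod>n<N. (1 - cis (th N n))) = 2"
proof -
  define p :: "complex poly" where "p = (\<Prod>n<N. [:- cis (th N n), 1:])"
  define q :: "complex poly" where "q = monom 1 N + 1"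
  have dp: "degree p = N"
    unfolding p_def by (subst degree_prod_sum_eq) auto
  have lp: "lead_coeff p = 1"
    unfolding p_def by (simp add: lead_coeff_prod)
  have dq: "degree q \<le> N"
    unfolding q_def by (intro degree_add_le degree_monom_le) simp
  have cq: "coeff q N = 1" unfolding q_def using N by simp
  have "p = q"
  proof (rule poly_eqI_degree_lead_coeff[where n = N and A = "(\<lambda>n. cis (th N n)) ` {..<N}"])
    show "coeff p N = coeff q N" using lp dp cq by simp
    have "inj_on (\<lambda>n. cis (th N n)) {..<N}"
      by (rule inj_onI) (auto intro: z_inj[OF N])
    then show "N \<le> card ((\<lambda>n. cis (th N n)) ` {..<N})" by (simp add: card_image)
    show "degree p \<le> N" using dp by simp
    show "degree q \<le> N" by (fact dq)
    fix z assume "z \<in> (\<lambda>n. cis (th N n)) ` {..<N}"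
    then obtain n where n: "n < N" "z = cis (th N n)" by auto
    have "poly p z = 0" unfolding p_def poly_prod using n by (auto intro!: prod_zero)
    moreover have "poly q z = 0" unfolding q_def using n z_pow_N[OF N, of n] by (simp add: poly_monom)
    ultimately show "poly p z = poly q z" by simp
  qed
  then have "poly p 1 = poly q 1" by simp
  then show ?thesis unfolding p_def q_def poly_prod by (simp add: poly_monom)
qed

lemma inv_one_minus_z:
  assumes N: "N > 0"
  shows "1 / (1 - cis (th N n)) = (\<Sum>k<N. cis (th N n * real k)) / 2"
proof -
  have ne: "cis (th N n) \<noteq> 1" using z_ne_1[OF N, of n] by simp
  have ne': "1 - cis (th N n) \<noteq> 0" using z_ne_1[OF N] by simp
  have "(\<Sum>k<N. cis (th N n) ^ k) = (1 - cis (th N n) ^ N) / (1 - cis (th N n))"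
    using ne by (simp add: sum_gp_strict)
  also have "\<dots> = 2 / (1 - cis (th N n))" using z_pow_N[OF N] by simp
  finally have "(\<Sum>k<N. cis (th N n * real k)) = 2 / (1 - cis (th N n))"
    by (simp add: DeMoivre mult.commute)
  define w where "w = 1 / (1 - cis (th N n))"
  then have "(\<Sum>k<N. cis (th N n * real k)) = 2 * w" using \<open>(\<Sum>k<N. cis (th N n * real k)) = 2 / (1 - cis (th N n))\<close> by simp
  then show ?thesis unfolding w_def[symmetric] by simp
qed

lemma H_sum:
  assumes N: "N > 0" and t1: "t1 < N" and t2: "t2 < N"
  shows "(\<Sum>n<N. cis (th N n * real_of_int (int t2 - int t1)) / (1 - cis (th N n)))
       = (if t2 \<le> t1 then of_nat N / 2 else - (of_nat N / 2))"
proof -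
  define d where "d = int t2 - int t1"
  have "(\<Sum>n<N. cis (th N n * real_of_int d) / (1 - cis (th N n)))
      = (\<Sum>n<N. \<Sum>k<N. cis (th N n * real_of_int (d + int k)) / 2)"
  proof (intro sum.cong refl)
    fix n
    have "cis (th N n * real_of_int d) / (1 - cis (th N n)) = cis (th N n * real_of_int d) * (1 / (1 - cis (th N n)))"
      by simp
    also have "\<dots> = (\<Sum>k<N. cis (th N n * real_of_int d) * cis (th N n * real k)) / 2"
      by (simp add: inv_one_minus_z[OF N] sum_distrib_left)
    also have "\<dots> = (\<Sum>k<N. cis (th N n * real_of_int (d + int k)) / 2)"
      by (simp add: cis_mult distrib_left sum_divide_distrib)
    finally show "cis (th N n * real_of_int d) / (1 - cis (th N n)) = (\<Sum>k<N. cis (th N n * real_of_int (d + int k)) / 2)" .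
  qed
  also have "\<dots> = (\<Sum>k<N. (\<Sum>n<N. cis (th N n * real_of_int (d + int k))) / 2)"
    by (subst sum.swap) (simp add: sum_divide_distrib)
  also have "\<dots> = (\<Sum>k<N. (if int N dvd (d + int k) then of_nat N * cis (pi * real_of_int (d + int k) / real N) else 0) / 2)"
    by (simp only: G2[OF N])
  also have "\<dots> = (if t2 \<le> t1 then of_nat N / 2 else - (of_nat N / 2))"
  proof (cases "t2 \<le> t1")
    case True
    have iff: "int N dvd (d + int k) \<longleftrightarrow> k = t1 - t2" if "k < N" for k
    proof
      assume "int N dvd (d + int k)"
      then obtain c where c: "d + int k = int N * c" by (auto simp: dvd_def)
      have "\<bar>d + int k\<bar> < int N" using that t1 t2 True by (auto simp: d_def)
      then have "\<bar>c\<bar> * int N < 1 * int N" using c by (simp add: abs_mult mult.commute)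
      then have "\<bar>c\<bar> < 1" by (rule mult_right_less_imp_less) simp
      then have "c = 0" by simp
      then show "k = t1 - t2" using c True by (simp add: d_def)
    next
      assume "k = t1 - t2"
      then show "int N dvd (d + int k)" using True by (simp add: d_def)
    qed
    have "(\<Sum>k<N. (if int N dvd (d + int k) then of_nat N * cis (pi * real_of_int (d + int k) / real N) else 0) / 2)
        = (\<Sum>k<N. (if k = t1 - t2 then of_nat N / 2 else 0))"
    proof (intro sum.cong refl)
      fix k assume "k \<in> {..<N}"
      then show "(if int N dvd (d + int k) then of_nat N * cis (pi * real_of_int (d + int k) / real N) else 0) / 2
          = (if k = t1 - t2 then of_nat N / 2 else (0::complex))"
        using iff[of k] True by (auto simp: d_def)
    qed
    also have "\<dots> = of_nat N / 2" using t1 by (simp add: sum.delta)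
    finally show ?thesis using True by simp
  next
    case False
    have iff: "int N dvd (d + int k) \<longleftrightarrow> k = N - (t2 - t1)" if "k < N" for k
    proof
      assume "int N dvd (d + int k)"
      then obtain c where c: "d + int k = int N * c" by (auto simp: dvd_def)
      have "0 < d + int k" "d + int k < 2 * int N" using that t1 t2 False by (auto simp: d_def)
      then have p: "0 < int N * c" "int N * c < int N * 2" using c by (auto simp: algebra_simps)
      have "0 < c" using p(1) N by (simp add: zero_less_mult_iff)
      moreover have "c < 2" using p(2) N by simp
      ultimately have "c = 1" by simp
      then show "k = N - (t2 - t1)" using c False t2 by (simp add: d_def)
    next
      assume "k = N - (t2 - t1)"
      then show "int N dvd (d + int k)" using False t2 by (simp add: d_def of_nat_diff)
    qed
    have "(\<Sum>k<N. (if int N dvd (d + int k) then of_nat N * cis (pi * real_of_int (d + int k) / real N) else 0) / 2)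
        = (\<Sum>k<N. (if k = N - (t2 - t1) then - (of_nat N / 2) else 0))"
    proof (intro sum.cong refl)
      fix k assume k: "k \<in> {..<N}"
      show "(if int N dvd (d + int k) then of_nat N * cis (pi * real_of_int (d + int k) / real N) else 0) / 2
          = (if k = N - (t2 - t1) then - (of_nat N / 2) else (0::complex))"
      proof (cases "k = N - (t2 - t1)")
        case True
        then have "d + int k = int N" using False t2 by (simp add: d_def of_nat_diff)
        then have "cis (pi * real_of_int (d + int k) / real N) = -1" using N by simp
        then show ?thesis using iff[of k] k True by simp
      next
        case F: False
        then show ?thesis using iff[of k] k by simp
      qed
    qed
    also have "\<dots> = - (of_nat N / 2)" using t1 t2 False by (simp add: sum.delta)
    finally show ?thesis using False by simp
  qed
  finally show ?thesis by (simp add: d_def)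
qed


definition Wf :: "nat \<Rightarrow> nat \<Rightarrow> nat \<Rightarrow> nat \<Rightarrow> complex" where
  "Wf L N m k = (if k mod L = m mod L then cis (th N (m div L) * real (k div L)) / complex_of_real (sqrt (real N)) else 0)"

lemma lt_LN:
  fixes t r L N :: nat
  assumes "t < N" "r < L"
  shows "t * L + r < L * N"
proof -
  have "t * L + r < t * L + L" using assms by simp
  also have "\<dots> = Suc t * L" by simp
  also have "\<dots> \<le> N * L" using assms by (intro mult_le_mono1) simp
  finally show ?thesis by (simp add: mult.commute)
qed

lemma sum_split_LN:
  fixes L N :: nat
  assumes L: "L > 0"
  shows "(\<Sum>k<L * N. g k) = (\<Sum>t<N. \<Sum>r<L. g (t * L + r))"
proof -
  have "(\<Sum>k<L * N. g k) = (\<Sum>p\<in>{..<N} \<times> {..<L}. g (fst p * L + snd p))"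
  proof (rule sum.reindex_bij_witness[where i="\<lambda>p. fst p * L + snd p" and j="\<lambda>k. (k div L, k mod L)"])
    fix k assume "k \<in> {..<L * N}"
    then show "(k div L, k mod L) \<in> {..<N} \<times> {..<L}"
      using L by (auto simp: div_less_iff_less_mult mult.commute)
  next
    fix p assume "p \<in> {..<N} \<times> {..<L}"
    then show "fst p * L + snd p \<in> {..<L * N}" using lt_LN by auto
  qed (use L in auto)
  also have "\<dots> = (\<Sum>t<N. \<Sum>r<L. g (t * L + r))"
    by (simp add: sum.cartesian_product case_prod_beta)
  finally show ?thesis .
qed

lemma prod_split_LN:
  fixes L N :: nat
  assumes L: "L > 0"
  shows "(\<Prod>k<L * N. g k) = (\<Prod>t<N. \<Prod>r<L. g (t * L + r))"
proof -
  have "(\<Prod>k<L * N. g k) = (\<Prod>p\<in>{..<N} \<times> {..<L}. g (fst p * L + snd p))"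
  proof (rule prod.reindex_bij_witness[where i="\<lambda>p. fst p * L + snd p" and j="\<lambda>k. (k div L, k mod L)"])
    fix k assume "k \<in> {..<L * N}"
    then show "(k div L, k mod L) \<in> {..<N} \<times> {..<L}"
      using L by (auto simp: div_less_iff_less_mult mult.commute)
  next
    fix p assume "p \<in> {..<N} \<times> {..<L}"
    then show "fst p * L + snd p \<in> {..<L * N}" using lt_LN by auto
  qed (use L in auto)
  also have "\<dots> = (\<Prod>t<N. \<Prod>r<L. g (t * L + r))"
    by (simp add: prod.cartesian_product case_prod_beta)
  finally show ?thesis .
qed

lemma sum_delta_mult:
  fixes a b L :: nat
  assumes "a < L" 
  shows "(\<Sum>r<L. (if r = a then f r else 0) * (if r = b then g r else 0)) = (if a = b then f a * g a else (0::complex))"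
proof -
  have "(\<Sum>r<L. (if r = a then f r else 0) * (if r = b then g r else 0)) = (\<Sum>r<L. if r = a then (if a = b then f a * g a else 0) else 0)"
    by (intro sum.cong) auto
  also have "\<dots> = (if a = b then f a * g a else 0)" using assms by simp
  finally show ?thesis .
qed

lemma divmod_LN:
  fixes t r L :: nat
  assumes "r < L"
  shows "(t * L + r) div L = t" "(t * L + r) mod L = r"
  using assms by auto

lemma sqrtN_sq: "complex_of_real (sqrt (real N)) * complex_of_real (sqrt (real N)) = of_nat N"
  by (simp flip: of_real_mult)

lemma div_sqrtN: "a / complex_of_real (sqrt (real N)) * (b / complex_of_real (sqrt (real N))) = a * b / of_nat N"
  by (simp only: times_divide_times_eq sqrtN_sq)

lemma Wf_rows:
  assumes L: "L > 0" and N: "N > 0" and m: "m < L * N" and m': "m' < L * N"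
  shows "(\<Sum>k<L * N. Wf L N m k * cnj (Wf L N m' k)) = (if m = m' then 1 else 0)"
proof -
  define n where "n = m div L"
  define n' where "n' = m' div L"
  have nN: "n < N" "n' < N" using m m' L by (auto simp: n_def n'_def div_less_iff_less_mult mult.commute)
  have "(\<Sum>k<L * N. Wf L N m k * cnj (Wf L N m' k))
      = (\<Sum>t<N. \<Sum>r<L. (if r = m mod L then cis (th N n * real t) / complex_of_real (sqrt (real N)) else 0)
                       * (if r = m' mod L then cnj (cis (th N n' * real t)) / complex_of_real (sqrt (real N)) else 0))"
    unfolding sum_split_LN[OF L] Wf_def n_def n'_def by (intro sum.cong refl) (simp add: divmod_LN)
  also have "\<dots> = (\<Sum>t<N. if m mod L = m' mod L then cis (th N n * real t) * cnj (cis (th N n' * real t)) / of_nat N else 0)"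
    using L by (simp add: sum_delta_mult) (simp only: div_sqrtN)
  also have "\<dots> = (if m mod L = m' mod L then (\<Sum>t<N. cis (2 * pi * real_of_int (int n - int n') * real t / real N)) / of_nat N else 0)"
  proof -
    have "cis (th N n * real t) * cnj (cis (th N n' * real t)) = cis (2 * pi * real_of_int (int n - int n') * real t / real N)" for t
      unfolding cis_cnj cis_mult th_def using N by (intro arg_cong[where f=cis]) (simp add: field_simps)
    then show ?thesis by (simp add: sum_divide_distrib)
  qed
  also have "\<dots> = (if m = m' then 1 else 0)"
  proof (cases "m mod L = m' mod L")
    case True
    have iff: "int N dvd (int n - int n') \<longleftrightarrow> n = n'"
    proof
      assume "int N dvd (int n - int n')"
      then obtain c where c: "int n - int n' = int N * c" by (auto simp: dvd_def)
      have "\<bar>int n - int n'\<bar> < int N" using nN by simp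
      then have "\<bar>c\<bar> * int N < 1 * int N" using c by (simp add: abs_mult mult.commute)
      then have "\<bar>c\<bar> < 1" by (rule mult_right_less_imp_less) simp
      then show "n = n'" using c by simp
    qed simp
    have "m = m' \<longleftrightarrow> n = n'" using True div_mult_mod_eq[of m L] div_mult_mod_eq[of m' L] unfolding n_def n'_def by metis
    then show ?thesis using True geo_int[OF N, of "int n - int n'"] iff N by simp
  next
    case False
    then show ?thesis by auto
  qed
  finally show ?thesis .
qed

lemma Wf_cols:
  assumes L: "L > 0" and N: "N > 0" and k: "k < L * N" and k': "k' < L * N"
  shows "(\<Sum>m<L * N. cnj (Wf L N m k) * Wf L N m k') = (if k = k' then 1 else 0)"
proof -
  define t where "t = k div L"
  define t' where "t' = k' div L"
  have tN: "t < N" "t' < N" using k k' L by (auto simp: t_def t'_def div_less_iff_less_mult mult.commute)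
  have "(\<Sum>m<L * N. cnj (Wf L N m k) * Wf L N m k')
      = (\<Sum>n<N. \<Sum>r<L. (if r = k mod L then cnj (cis (th N n * real t)) / complex_of_real (sqrt (real N)) else 0)
                       * (if r = k' mod L then cis (th N n * real t') / complex_of_real (sqrt (real N)) else 0))"
    unfolding sum_split_LN[OF L] Wf_def t_def t'_def by (intro sum.cong refl) (simp add: divmod_LN)
  also have "\<dots> = (\<Sum>n<N. if k mod L = k' mod L then cnj (cis (th N n * real t)) * cis (th N n * real t') / of_nat N else 0)"
    using L by (simp add: sum_delta_mult) (simp only: div_sqrtN)
  also have "\<dots> = (if k mod L = k' mod L then (\<Sum>n<N. cis (th N n * real_of_int (int t' - int t))) / of_nat N else 0)"
  proof -
    have "cnj (cis (th N n * real t)) * cis (th N n * real t') = cis (th N n * real_of_int (int t' - int t))" for n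
      unfolding cis_cnj cis_mult by (intro arg_cong[where f=cis]) (simp add: algebra_simps)
    then show ?thesis by (simp add: sum_divide_distrib)
  qed
  also have "\<dots> = (if k = k' then 1 else 0)"
  proof (cases "k mod L = k' mod L")
    case True
    have iff: "int N dvd (int t' - int t) \<longleftrightarrow> t = t'"
    proof
      assume "int N dvd (int t' - int t)"
      then obtain c where c: "int t' - int t = int N * c" by (auto simp: dvd_def)
      have "\<bar>int t' - int t\<bar> < int N" using tN by simp
      then have "\<bar>c\<bar> * int N < 1 * int N" using c by (simp add: abs_mult mult.commute)
      then have "\<bar>c\<bar> < 1" by (rule mult_right_less_imp_less) simp
      then show "t = t'" using c by simp
    qed simp
    have "k = k' \<longleftrightarrow> t = t'" using True div_mult_mod_eq[of k L] div_mult_mod_eq[of k' L] unfolding t_def t'_def by metis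
    then show ?thesis using True G2[OF N, of "int t' - int t"] iff N by simp
  next
    case False
    then show ?thesis by auto
  qed
  finally show ?thesis .
qed

lemma fermi_Wf: "L > 0 \<Longrightarrow> N > 0 \<Longrightarrow> fermi (L * N) (Wf L N)"
  by unfold_locales (simp_all add: Wf_rows Wf_cols)


lemma app_mscale: "app M (mscale c A) x S = c * app M A x S"
  by (simp add: app_def mscale_def sum_distrib_left mult.assoc)

lemma app_msum: "app M (msum I f) x S = (\<Sum>i\<in>I. app M (f i) x S)"
  unfolding app_def msum_def by (simp add: sum_distrib_right) (rule sum.swap)

lemma madj_mscale: "madj (mscale c A) = mscale (cnj c) (madj A)"
  by (simp add: madj_def mscale_def fun_eq_iff)

lemma madj_msum: "madj (msum I f) = msum I (\<lambda>i. madj (f i))"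
  by (simp add: madj_def msum_def fun_eq_iff)

lemma app_cong: "(\<And>U. U \<in> fock M \<Longrightarrow> x U = y U) \<Longrightarrow> app M A x S = app M A y S"
  by (simp add: app_def)

lemma annv_cong: "k < M \<Longrightarrow> S \<in> fock M \<Longrightarrow> (\<And>U. U \<in> fock M \<Longrightarrow> x U = y U) \<Longrightarrow> annv k x S = annv k y S"
  by (simp add: annv_def fock_insert)

lemma crev_cong: "S \<in> fock M \<Longrightarrow> (\<And>U. U \<in> fock M \<Longrightarrow> x U = y U) \<Longrightarrow> crev k x S = crev k y S"
  by (simp add: crev_def fock_remove)

context fermi
begin

lemma bv_cong:
  assumes S: "S \<in> fock M" and eq: "\<And>U. U \<in> fock M \<Longrightarrow> x U = y U"
  shows "bv m x S = bv m y S"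
proof -
  have "annv k x S = annv k y S" if "k < M" for k using annv_cong[OF that S eq] .
  then show ?thesis unfolding bv_def by (intro sum.cong refl) simp
qed

lemma bcv_cong:
  assumes S: "S \<in> fock M" and eq: "\<And>U. U \<in> fock M \<Longrightarrow> x U = y U"
  shows "bcv m x S = bcv m y S"
proof -
  have "crev k x S = crev k y S" for k using crev_cong[OF S eq] .
  then show ?thesis unfolding bcv_def by (intro sum.cong refl) simp
qed

end

lemma aH_idx: "t < N \<Longrightarrow> i \<in> {1..L} \<Longrightarrow> t * L + (i - 1) < L * (N::nat)"
  by (rule lt_LN) auto

lemma omega_eps: "\<epsilon> \<noteq> 0 \<Longrightarrow> omega N \<epsilon> n * \<epsilon> = th N n"
  by (simp add: omega_def th_def)

lemma exp_omega: "\<epsilon> \<noteq> 0 \<Longrightarrow> exp (\<i> * complex_of_real (omega N \<epsilon> n * \<epsilon> * real t)) = cis (th N n * real t)"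
  by (simp add: omega_eps cis_conv_exp)

locale cfg =
  fixes L N :: nat and \<epsilon> :: real
  assumes Lpos: "L > 0" and Npos: "N > 0" and epos: "\<epsilon> > 0"
begin

sublocale F: fermi "L * N" "Wf L N"
  by (rule fermi_Wf[OF Lpos Npos])

abbreviation "M \<equiv> L * N"

lemma Wf_at:
  assumes "jj < L" "n < N" "r < L"
  shows "Wf L N (n * L + jj) (t * L + r) = (if r = jj then cis (th N n * real t) / complex_of_real (sqrt (real N)) else 0)"
  using assms by (simp add: Wf_def divmod_LN)

lemma bv_at:
  assumes jL: "jj < L" and n: "n < N"
  shows "F.bv (n * L + jj) y S = (\<Sum>t<N. cis (th N n * real t) / complex_of_real (sqrt (real N)) * annv (t * L + jj) y S)"
proof -
  have "F.bv (n * L + jj) y S = (\<Sum>t<N. \<Sum>r<L. Wf L N (n * L + jj) (t * L + r) * annv (t * L + r) y S)"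
    unfolding F.bv_def sum_split_LN[OF Lpos] ..
  also have "\<dots> = (\<Sum>t<N. \<Sum>r<L. if r = jj then cis (th N n * real t) / complex_of_real (sqrt (real N)) * annv (t * L + r) y S else 0)"
    using jL n by (intro sum.cong refl) (simp add: Wf_at)
  also have "\<dots> = (\<Sum>t<N. cis (th N n * real t) / complex_of_real (sqrt (real N)) * annv (t * L + jj) y S)"
    using jL by simp
  finally show ?thesis .
qed

lemma bcv_at:
  assumes jL: "jj < L" and n: "n < N"
  shows "F.bcv (n * L + jj) y S = (\<Sum>t<N. cnj (cis (th N n * real t) / complex_of_real (sqrt (real N))) * crev (t * L + jj) y S)"
proof -
  have "F.bcv (n * L + jj) y S = (\<Sum>t<N. \<Sum>r<L. cnj (Wf L N (n * L + jj) (t * L + r)) * crev (t * L + r) y S)"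
    unfolding F.bcv_def sum_split_LN[OF Lpos] ..
  also have "\<dots> = (\<Sum>t<N. \<Sum>r<L. if r = jj then cnj (cis (th N n * real t) / complex_of_real (sqrt (real N))) * crev (t * L + r) y S else 0)"
    using jL n by (intro sum.cong refl) (simp add: Wf_at)
  also have "\<dots> = (\<Sum>t<N. cnj (cis (th N n * real t) / complex_of_real (sqrt (real N))) * crev (t * L + jj) y S)"
    using jL by simp
  finally show ?thesis .
qed

lemma ahat_app:
  assumes j: "j \<in> {1..L}" and n: "n < N" and S: "S \<in> fock M"
  shows "app M (ahat L N \<epsilon> n j) y S = F.bv (n * L + (j - 1)) y S"
proof -
  define jj where "jj = j - 1"
  have jL: "jj < L" using j by (auto simp: jj_def)
  have idx: "t * L + jj < M" if "t < N" for t using lt_LN[OF that jL] .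
  have "app M (ahat L N \<epsilon> n j) y S = 1 / complex_of_real (sqrt (real N)) *
      (\<Sum>t<N. exp (\<i> * complex_of_real (omega N \<epsilon> n * \<epsilon> * real t)) * annv (t * L + jj) y S)"
    unfolding ahat_def app_mscale app_msum a_H_def jj_def[symmetric]
    using S idx by (simp add: app_ann)
  also have "\<dots> = 1 / complex_of_real (sqrt (real N)) *
      (\<Sum>t<N. cis (th N n * real t) * annv (t * L + jj) y S)"
    using epos by (simp only: exp_omega[of \<epsilon>] less_irrefl not_False_eq_True order.strict_implies_not_eq)
  also have "\<dots> = F.bv (n * L + jj) y S"
    unfolding bv_at[OF jL n] by (simp add: sum_distrib_left)
  finally show ?thesis by (simp only: jj_def)
qed

lemma adj_ahat_app:
  assumes j: "j \<in> {1..L}" and n: "n < N" and S: "S \<in> fock M"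
  shows "app M (madj (ahat L N \<epsilon> n j)) y S = F.bcv (n * L + (j - 1)) y S"
proof -
  define jj where "jj = j - 1"
  have jL: "jj < L" using j by (auto simp: jj_def)
  have "app M (madj (ahat L N \<epsilon> n j)) y S = cnj (1 / complex_of_real (sqrt (real N))) *
      (\<Sum>t<N. cnj (exp (\<i> * complex_of_real (omega N \<epsilon> n * \<epsilon> * real t))) * crev (t * L + jj) y S)"
    unfolding ahat_def madj_mscale madj_msum app_mscale app_msum a_H_def cre_def[symmetric] jj_def[symmetric]
    using S by (simp add: app_cre)
  also have "\<dots> = cnj (1 / complex_of_real (sqrt (real N))) *
      (\<Sum>t<N. cnj (cis (th N n * real t)) * crev (t * L + jj) y S)"
    using epos by (simp only: exp_omega[of \<epsilon>] less_irrefl not_False_eq_True order.strict_implies_not_eq)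
  also have "\<dots> = F.bcv (n * L + jj) y S"
    unfolding bcv_at[OF jL n] by (simp add: sum_distrib_left)
  finally show ?thesis by (simp only: jj_def)
qed

lemma reindex_pairs:
  "(\<Sum>p\<in>{..<N} \<times> {1..L}. g (fst p * L + (snd p - 1))) = (\<Sum>m<M. g m)"
proof (rule sum.reindex_bij_witness[where i="\<lambda>m. (m div L, m mod L + 1)" and j="\<lambda>p. fst p * L + (snd p - 1)"])
  fix m assume "m \<in> {..<M}"
  then show "(m div L, m mod L + 1) \<in> {..<N} \<times> {1..L}"
    using Lpos by (auto simp: div_less_iff_less_mult mult.commute Suc_le_eq)
next
  fix p assume "p \<in> {..<N} \<times> {1..L}"
  then show "fst p * L + (snd p - 1) \<in> {..<M}" using aH_idx[of "fst p" N "snd p" L] by auto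
next
  fix p assume p: "p \<in> {..<N} \<times> {1..L}"
  then have "snd p - 1 < L" by auto
  then show "((fst p * L + (snd p - 1)) div L, (fst p * L + (snd p - 1)) mod L + 1) = p"
    using p by (auto simp: divmod_LN prod_eq_iff)
qed (use Lpos in auto)

lemma Pcal_app:
  assumes S: "S \<in> fock M"
  shows "app M (Pcal L N \<epsilon>) x S = (\<Sum>m<M. complex_of_real (omega N \<epsilon> (m div L)) * F.bcv m (F.bv m x) S)"
proof -
  have "app M (Pcal L N \<epsilon>) x S = (\<Sum>p\<in>{..<N} \<times> {1..L}.
      complex_of_real (omega N \<epsilon> (fst p)) * F.bcv (fst p * L + (snd p - 1)) (F.bv (fst p * L + (snd p - 1)) x) S)"
    unfolding Pcal_def app_msum
  proof (intro sum.cong refl)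
    fix p assume p: "p \<in> {..<N} \<times> {1..L}"
    obtain n j where nj: "p = (n, j)" by fastforce
    have n: "n < N" and j: "j \<in> {1..L}" using p nj by auto
    have "app M (mmul M (madj (ahat L N \<epsilon> n j)) (ahat L N \<epsilon> n j)) x S
        = F.bcv (n * L + (j - 1)) (app M (ahat L N \<epsilon> n j) x) S"
      by (simp add: app_mmul adj_ahat_app[OF j n S])
    also have "\<dots> = F.bcv (n * L + (j - 1)) (F.bv (n * L + (j - 1)) x) S"
      by (rule F.bcv_cong[OF S]) (simp add: ahat_app[OF j n])
    finally show "app M ((\<lambda>(n, j). mscale (complex_of_real (omega N \<epsilon> n)) (mmul M (madj (ahat L N \<epsilon> n j)) (ahat L N \<epsilon> n j))) p) x S
        = complex_of_real (omega N \<epsilon> (fst p)) * F.bcv (fst p * L + (snd p - 1)) (F.bv (fst p * L + (snd p - 1)) x) S"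
      by (simp add: nj app_mscale)
  qed
  also have "\<dots> = (\<Sum>m<M. complex_of_real (omega N \<epsilon> (m div L)) * F.bcv m (F.bv m x) S)"
  proof -
    have "(\<Sum>p\<in>{..<N} \<times> {1..L}. complex_of_real (omega N \<epsilon> (fst p)) * F.bcv (fst p * L + (snd p - 1)) (F.bv (fst p * L + (snd p - 1)) x) S)
        = (\<Sum>p\<in>{..<N} \<times> {1..L}. (\<lambda>m. complex_of_real (omega N \<epsilon> (m div L)) * F.bcv m (F.bv m x) S) (fst p * L + (snd p - 1)))"
    proof (intro sum.cong refl)
      fix p assume "p \<in> {..<N} \<times> {1..L}"
      then have "snd p - 1 < L" by auto
      then show "complex_of_real (omega N \<epsilon> (fst p)) * F.bcv (fst p * L + (snd p - 1)) (F.bv (fst p * L + (snd p - 1)) x) S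
          = (\<lambda>m. complex_of_real (omega N \<epsilon> (m div L)) * F.bcv m (F.bv m x) S) (fst p * L + (snd p - 1))"
        by (simp add: divmod_LN)
    qed
    also have "\<dots> = (\<Sum>m<M. complex_of_real (omega N \<epsilon> (m div L)) * F.bcv m (F.bv m x) S)"
      by (rule reindex_pairs[where g="\<lambda>m. complex_of_real (omega N \<epsilon> (m div L)) * F.bcv m (F.bv m x) S"])
    finally show ?thesis .
  qed
  finally show ?thesis .
qed

end


context cfg
begin

abbreviation "Nop \<equiv> msum ({..<N} \<times> {1..L}) (\<lambda>(t, i). mmul M (madj (a_H L t i)) (a_H L t i))"

lemma app_es: "T \<in> fock M \<Longrightarrow> app M A (F.es T) S = A S T"
  by (simp add: app_def F.es_def if01_mult[simplified mult.commute])

lemma crev_annv_same: "crev k (annv k x) S = (if k \<in> S then x S else 0)"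
  by (auto simp: crev_def annv_def insert_absorb mult.assoc[symmetric])

lemma card_as_sum:
  assumes "S \<in> fock M"
  shows "(\<Sum>m<M. if m \<in> S then 1 else 0) = (of_nat (card S) :: complex)"
proof -
  have "(\<Sum>m<M. if m \<in> S then 1 else (0::complex)) = (\<Sum>m\<in>S. 1)"
    using assms F.fock_sub by (intro sum.mono_neutral_cong_right) auto
  then show ?thesis by simp
qed

lemma Nop_entry:
  assumes S: "S \<in> fock M" and T: "T \<in> fock M"
  shows "Nop S T = (if S = T then of_nat (card S) else 0)"
proof -
  have "Nop S T = app M Nop (F.es T) S" using app_es[OF T] by simp
  also have "\<dots> = (\<Sum>p\<in>{..<N} \<times> {1..L}. (\<lambda>m. if m \<in> S then F.es T S else 0) (fst p * L + (snd p - 1)))"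
    unfolding app_msum
  proof (intro sum.cong refl)
    fix p assume p: "p \<in> {..<N} \<times> {1..L}"
    obtain t i where ti: "p = (t, i)" by fastforce
    have k: "t * L + (i - 1) < M" using p ti aH_idx by auto
    have "app M (mmul M (madj (a_H L t i)) (a_H L t i)) (F.es T) S
        = crev (t * L + (i - 1)) (app M (ann (t * L + (i - 1))) (F.es T)) S"
      unfolding app_mmul a_H_def cre_def[symmetric] using S by (simp add: app_cre)
    also have "\<dots> = crev (t * L + (i - 1)) (annv (t * L + (i - 1)) (F.es T)) S"
      by (rule crev_cong[OF S app_ann[OF k]])
    also have "\<dots> = (if t * L + (i - 1) \<in> S then F.es T S else 0)"
      by (simp add: crev_annv_same)
    finally show "app M ((\<lambda>(t, i). mmul M (madj (a_H L t i)) (a_H L t i)) p) (F.es T) S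
        = (\<lambda>m. if m \<in> S then F.es T S else 0) (fst p * L + (snd p - 1))"
      by (simp add: ti)
  qed
  also have "\<dots> = (\<Sum>m<M. if m \<in> S then F.es T S else 0)"
    by (rule reindex_pairs[where g="\<lambda>m. if m \<in> S then F.es T S else 0"])
  also have "\<dots> = (\<Sum>m<M. if m \<in> S then 1 else 0) * F.es T S"
    by (simp add: sum_distrib_right if01_mult)
  also have "\<dots> = of_nat (card S) * F.es T S" using card_as_sum[OF S] by simp
  finally show ?thesis by (simp add: F.es_def)
qed

lemma Npar_entry:
  assumes S: "S \<in> fock M" and T: "T \<in> fock M"
  shows "Npar L N S T = (if S = T then (-1) ^ card S else 0)"
proof -
  have "Npar L N S T = (\<Sum>A\<in>fock M. F.es A S * exp (\<i> * complex_of_real pi * of_nat (card A)) * cnj (F.es A T))"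
    unfolding Npar_def
  proof (rule mexp_spectral[OF finite_fock _ _ _ S T])
    fix a b assume a: "a \<in> fock M" "b \<in> fock M"
    have "(\<Sum>S\<in>fock M. cnj (F.es a S) * F.es b S) = (\<Sum>S\<in>fock M. if S = a then (if a = b then 1 else 0) else 0)"
      by (intro sum.cong refl) (auto simp: F.es_def)
    also have "\<dots> = (if a = b then 1 else 0)" using a by simp
    finally show "(\<Sum>S\<in>fock M. cnj (F.es a S) * F.es b S) = (if a = b then 1 else 0)" .
  next
    fix S T assume st: "S \<in> fock M" "T \<in> fock M"
    have "(\<Sum>a\<in>fock M. F.es a S * cnj (F.es a T)) = (\<Sum>a\<in>fock M. if a = S then (if S = T then 1 else 0) else 0)"
      by (intro sum.cong refl) (auto simp: F.es_def)
    also have "\<dots> = (if S = T then 1 else 0)" using st by simp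
    finally show "(\<Sum>a\<in>fock M. F.es a S * cnj (F.es a T)) = (if S = T then 1 else 0)" .
  next
    fix a S assume a: "a \<in> fock M" and S: "S \<in> fock M"
    have "(\<Sum>U\<in>fock M. mscale (\<i> * complex_of_real pi) Nop S U * F.es a U) = mscale (\<i> * complex_of_real pi) Nop S a"
      using app_es[OF a, of "mscale (\<i> * complex_of_real pi) Nop" S] by (simp add: app_def)
    also have "\<dots> = \<i> * complex_of_real pi * of_nat (card a) * F.es a S"
      using Nop_entry[OF S a] by (simp add: mscale_def F.es_def)
    finally show "(\<Sum>U\<in>fock M. mscale (\<i> * complex_of_real pi) Nop S U * F.es a U) = \<i> * complex_of_real pi * of_nat (card a) * F.es a S" .
  qed
  also have "\<dots> = (\<Sum>A\<in>fock M. if A = S then (if S = T then exp (\<i> * complex_of_real pi * of_nat (card S)) else 0) else 0)"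
    by (intro sum.cong refl) (auto simp: F.es_def)
  also have "\<dots> = (if S = T then exp (\<i> * complex_of_real pi * of_nat (card S)) else 0)"
    using S by simp
  also have "exp (\<i> * complex_of_real pi * of_nat (card S)) = (-1) ^ card S"
  proof -
    have "exp (\<i> * complex_of_real pi * of_nat (card S)) = exp (of_nat (card S) * (\<i> * complex_of_real pi))"
      by (simp add: mult.commute)
    also have "\<dots> = (-1) ^ card S" by (simp only: exp_of_nat_mult exp_pi_i')
    finally show ?thesis .
  qed
  finally show ?thesis .
qed

definition zz :: "nat set \<Rightarrow> complex" where
  "zz A = (\<Prod>m\<in>A. cis (th N (m div L)))"

abbreviation "Emat \<equiv> mexp M (mscale (\<i> * complex_of_real \<epsilon>) (Pcal L N \<epsilon>))"

lemma sum_in_A: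
  assumes "A \<in> fock M"
  shows "(\<Sum>m<M. f m * (if m \<in> A then x else 0)) = (\<Sum>m\<in>A. f m) * (x::complex)"
proof -
  have "(\<Sum>m<M. f m * (if m \<in> A then x else 0)) = (\<Sum>m\<in>A. f m * x)"
    using assms F.fock_sub by (intro sum.mono_neutral_cong_right) auto
  then show ?thesis by (simp add: sum_distrib_right)
qed

lemma E_entry:
  assumes S: "S \<in> fock M" and T: "T \<in> fock M"
  shows "Emat S T = (\<Sum>A\<in>fock M. F.v A S * zz A * cnj (F.v A T))"
proof -
  have "Emat S T = (\<Sum>A\<in>fock M. F.v A S * exp (\<i> * complex_of_real \<epsilon> * (\<Sum>m\<in>A. complex_of_real (omega N \<epsilon> (m div L)))) * cnj (F.v A T))"
  proof (rule mexp_spectral[OF finite_fock _ _ _ S T])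
    fix a b assume "a \<in> fock M" "b \<in> fock M"
    then show "(\<Sum>S\<in>fock M. cnj (F.v a S) * F.v b S) = (if a = b then 1 else 0)"
      using F.v_ortho by (simp add: ip_def)
  next
    fix S T assume "S \<in> fock M" "T \<in> fock M"
    then show "(\<Sum>a\<in>fock M. F.v a S * cnj (F.v a T)) = (if S = T then 1 else 0)"
      using F.complete by simp
  next
    fix a S assume a: "a \<in> fock M" and S: "S \<in> fock M"
    have "(\<Sum>U\<in>fock M. mscale (\<i> * complex_of_real \<epsilon>) (Pcal L N \<epsilon>) S U * F.v a U)
        = \<i> * complex_of_real \<epsilon> * app M (Pcal L N \<epsilon>) (F.v a) S"
      by (simp add: mscale_def app_def sum_distrib_left mult.assoc)
    also have "\<dots> = \<i> * complex_of_real \<epsilon> * (\<Sum>m<M. complex_of_real (omega N \<epsilon> (m div L)) * (if m \<in> a then F.v a S else 0))"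
      using a by (simp add: Pcal_app[OF S] F.v_num)
    also have "\<dots> = \<i> * complex_of_real \<epsilon> * (\<Sum>m\<in>a. complex_of_real (omega N \<epsilon> (m div L))) * F.v a S"
      by (simp add: sum_in_A[OF a])
    finally show "(\<Sum>U\<in>fock M. mscale (\<i> * complex_of_real \<epsilon>) (Pcal L N \<epsilon>) S U * F.v a U)
        = \<i> * complex_of_real \<epsilon> * (\<Sum>m\<in>a. complex_of_real (omega N \<epsilon> (m div L))) * F.v a S" .
  qed
  also have "\<dots> = (\<Sum>A\<in>fock M. F.v A S * zz A * cnj (F.v A T))"
  proof (intro sum.cong refl)
    fix A assume A: "A \<in> fock M"
    then have fA: "finite A" by (rule fock_finite)
    have "exp (\<i> * complex_of_real \<epsilon> * (\<Sum>m\<in>A. complex_of_real (omega N \<epsilon> (m div L))))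
        = exp (\<Sum>m\<in>A. \<i> * complex_of_real (omega N \<epsilon> (m div L) * \<epsilon>))"
      by (simp add: sum_distrib_left algebra_simps)
    also have "\<dots> = (\<Prod>m\<in>A. exp (\<i> * complex_of_real (omega N \<epsilon> (m div L) * \<epsilon>)))"
      by (rule exp_sum[OF fA])
    also have "\<dots> = zz A"
      unfolding zz_def using epos by (intro prod.cong refl) (simp add: omega_eps cis_conv_exp)
    finally show "F.v A S * exp (\<i> * complex_of_real \<epsilon> * (\<Sum>m\<in>A. complex_of_real (omega N \<epsilon> (m div L)))) * cnj (F.v A T)
        = F.v A S * zz A * cnj (F.v A T)" by simp
  qed
  finally show ?thesis .
qed

lemma PE_entry:
  assumes S: "S \<in> fock M" and V: "V \<in> fock M"
  shows "PE L N \<epsilon> S V = (-1) ^ card S * Emat S V"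
proof -
  have "PE L N \<epsilon> S V = (\<Sum>U\<in>fock M. (if S = U then (-1) ^ card S else 0) * Emat U V)"
    unfolding PE_def mmul_def using S by (intro sum.cong refl) (simp add: Npar_entry)
  also have "\<dots> = (-1) ^ card S * Emat S V" using S by (simp add: if_distrib[of "\<lambda>x. x * _"] cong: if_cong)
  finally show ?thesis .
qed

lemma sign_supp:
  assumes S: "S \<in> fock M" and A: "A \<in> fock M"
  shows "(-1) ^ card S * F.v A S = (-1) ^ card A * F.v A S"
proof (cases "F.v A S = 0")
  case False
  then have "card S = card A" using F.v_supp fock_finite S A by blast
  then show ?thesis by simp
qed simp

lemma trace_formula:
  "mtr M (mmul M (PE L N \<epsilon>) Z) = (\<Sum>A\<in>fock M. zz A * (-1) ^ card A * ip M (F.v A) (app M Z (F.v A)))"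
proof -
  have "mtr M (mmul M (PE L N \<epsilon>) Z) = (\<Sum>S\<in>fock M. \<Sum>V\<in>fock M. \<Sum>A\<in>fock M.
           zz A * ((-1) ^ card S * F.v A S) * (cnj (F.v A V) * Z V S))"
    unfolding mtr_def mmul_def
    by (intro sum.cong refl) (simp add: PE_entry E_entry sum_distrib_left sum_distrib_right algebra_simps)
  also have "\<dots> = (\<Sum>S\<in>fock M. \<Sum>V\<in>fock M. \<Sum>A\<in>fock M.
           zz A * ((-1) ^ card A * F.v A S) * (cnj (F.v A V) * Z V S))"
  proof (intro sum.cong refl)
    fix S V A assume S: "S \<in> fock M" and A: "A \<in> fock M"
    have e: "(-1) ^ card S * F.v A S = (-1) ^ card A * F.v A S" by (rule sign_supp[OF S A])
    show "zz A * ((-1) ^ card S * F.v A S) * (cnj (F.v A V) * Z V S) = zz A * ((-1) ^ card A * F.v A S) * (cnj (F.v A V) * Z V S)"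
      by (subst e) (rule refl)
  qed
  also have "\<dots> = (\<Sum>S\<in>fock M. \<Sum>A\<in>fock M. \<Sum>V\<in>fock M.
           zz A * ((-1) ^ card A * F.v A S) * (cnj (F.v A V) * Z V S))"
    by (rule sum.cong[OF refl]) (rule sum.swap)
  also have "\<dots> = (\<Sum>A\<in>fock M. \<Sum>S\<in>fock M. \<Sum>V\<in>fock M.
           zz A * ((-1) ^ card A * F.v A S) * (cnj (F.v A V) * Z V S))"
    by (rule sum.swap)
  also have "\<dots> = (\<Sum>A\<in>fock M. \<Sum>V\<in>fock M. \<Sum>S\<in>fock M.
           zz A * ((-1) ^ card A * F.v A S) * (cnj (F.v A V) * Z V S))"
    by (rule sum.cong[OF refl]) (rule sum.swap)
  also have "\<dots> = (\<Sum>A\<in>fock M. zz A * (-1) ^ card A * ip M (F.v A) (app M Z (F.v A)))"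
    unfolding ip_def app_def
    by (intro sum.cong refl) (simp add: sum_distrib_left sum_distrib_right algebra_simps)
  finally show ?thesis .
qed

end


lemma ip_cong: "(\<And>S. S \<in> fock M \<Longrightarrow> y S = y' S) \<Longrightarrow> ip M x y = ip M x y'"
  by (simp add: ip_def)

context fermi
begin

lemma bcv_v_fun:
  assumes "A \<in> fock M" "m < M"
  shows "bcv m (v A) = (\<lambda>S. (if m \<in> A then 0 else (-1) ^ card {x\<in>A. x < m}) * v (insert m A) S)"
  using v_bcv[OF assms] by auto

lemma ip_bcv_bcv:
  assumes A: "A \<in> fock M" and m: "m < M" and m': "m' < M"
  shows "ip M (bcv m (v A)) (bcv m' (v A)) = (if m = m' \<and> m \<notin> A then 1 else 0)"
proof -
  have iA: "insert m A \<in> fock M" "insert m' A \<in> fock M" using A m m' by (auto simp: fock_insert)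
  have "ip M (bcv m (v A)) (bcv m' (v A)) =
      cnj (if m \<in> A then 0 else (-1) ^ card {x\<in>A. x < m}) * (if m' \<in> A then 0 else (-1) ^ card {x\<in>A. x < m'})
      * ip M (v (insert m A)) (v (insert m' A))"
    unfolding bcv_v_fun[OF A m] bcv_v_fun[OF A m'] ip_scale_left ip_scale_right by simp
  also have "\<dots> = (if m = m' \<and> m \<notin> A then 1 else 0)"
  proof (cases "m \<in> A \<or> m' \<in> A")
    case True
    then show ?thesis by auto
  next
    case False
    then have "(insert m A = insert m' A) = (m = m')" by auto
    then show ?thesis using False v_ortho[OF iA] by (simp flip: power_add mult_2)
  qed
  finally show ?thesis .
qed

lemma ip_ac:
  assumes A: "A \<in> fock M" and k1: "k1 < M" and k2: "k2 < M"
  shows "ip M (v A) (\<lambda>S. annv k1 (crev k2 (v A)) S) = (\<Sum>m<M. cnj (W m k1) * W m k2 * (if m \<in> A then 0 else 1))"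
proof -
  have "ip M (v A) (\<lambda>S. annv k1 (crev k2 (v A)) S) = ip M (v A) (\<lambda>S. \<Sum>m<M. cnj (W m k1) * bv m (crev k2 (v A)) S)"
    by (simp add: annv_inv[OF k1])
  also have "\<dots> = (\<Sum>m<M. cnj (W m k1) * ip M (bcv m (v A)) (crev k2 (v A)))"
    by (simp add: ip_sum_right ip_scale_right ip_bv)
  also have "\<dots> = (\<Sum>m<M. cnj (W m k1) * (\<Sum>m'<M. W m' k2 * ip M (bcv m (v A)) (bcv m' (v A))))"
  proof -
    have "crev k2 (v A) = (\<lambda>S. \<Sum>m'<M. W m' k2 * bcv m' (v A) S)" using crev_inv[OF k2] by auto
    then show ?thesis by (simp add: ip_sum_right ip_scale_right)
  qed
  also have "\<dots> = (\<Sum>m<M. cnj (W m k1) * (\<Sum>m'<M. if m' = m then W m k2 * (if m \<in> A then 0 else 1) else 0))"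
    by (intro sum.cong refl arg_cong2[where f="(*)"]) (auto simp: ip_bcv_bcv[OF A])
  also have "\<dots> = (\<Sum>m<M. cnj (W m k1) * W m k2 * (if m \<in> A then 0 else 1))"
    by (intro sum.cong refl) simp
  finally show ?thesis .
qed

lemma ip_aa:
  assumes A: "A \<in> fock M"
  shows "ip M (v A) (\<lambda>S. annv k1 (annv k2 (v A)) S) = 0"
  unfolding ip_def
proof (intro sum.neutral ballI)
  fix S assume S: "S \<in> fock M"
  have fS: "finite S" "finite A" using S A fock_finite by auto
  show "cnj (v A S) * annv k1 (annv k2 (v A)) S = 0"
  proof (rule ccontr)
    assume "cnj (v A S) * annv k1 (annv k2 (v A)) S \<noteq> 0"
    then have h: "v A S \<noteq> 0" "annv k1 (annv k2 (v A)) S \<noteq> 0" by auto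
    then have c1: "card S = card A" using v_supp fS by blast
    from h(2) have "k1 \<notin> S" "k2 \<notin> insert k1 S" "v A (insert k2 (insert k1 S)) \<noteq> 0"
      by (auto simp: annv_def split: if_splits)
    then have "card (insert k2 (insert k1 S)) = card A" using v_supp fS by auto
    then have "Suc (Suc (card S)) = card A" using \<open>k1 \<notin> S\<close> \<open>k2 \<notin> insert k1 S\<close> fS by simp
    then show False using c1 by simp
  qed
qed

lemma ip_cc:
  assumes A: "A \<in> fock M"
  shows "ip M (v A) (\<lambda>S. crev k1 (crev k2 (v A)) S) = 0"
  unfolding ip_def
proof (intro sum.neutral ballI)
  fix S assume S: "S \<in> fock M"
  have fS: "finite S" "finite A" using S A fock_finite by auto
  show "cnj (v A S) * crev k1 (crev k2 (v A)) S = 0"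
  proof (rule ccontr)
    assume "cnj (v A S) * crev k1 (crev k2 (v A)) S \<noteq> 0"
    then have h: "v A S \<noteq> 0" "crev k1 (crev k2 (v A)) S \<noteq> 0" by auto
    then have c1: "card S = card A" using v_supp fS by blast
    from h(2) have k: "k1 \<in> S" "k2 \<in> S - {k1}" "v A (S - {k1} - {k2}) \<noteq> 0"
      by (auto simp: crev_def split: if_splits)
    then have "card (S - {k1} - {k2}) = card A" using v_supp fS by auto
    moreover have "card (S - {k1} - {k2}) = card S - 2" using k fS by (simp add: card_Diff_singleton_if)
    moreover have "card S \<ge> 2"
    proof -
      have "{k1, k2} \<subseteq> S" using k by auto
      then have "card {k1, k2} \<le> card S" using fS by (intro card_mono) auto
      then show ?thesis using k by auto
    qed
    ultimately show False using c1 by simp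
  qed
qed

end

context cfg
begin

abbreviation "zt t \<equiv> cis (th N t)"

lemma prod_all: "(\<Prod>m<M. (1 - zt (m div L))) = 2 ^ L"
proof -
  have "(\<Prod>m<M. (1 - zt (m div L))) = (\<Prod>t<N. \<Prod>r<L. (1 - zt ((t * L + r) div L)))"
    by (rule prod_split_LN[OF Lpos])
  also have "\<dots> = (\<Prod>t<N. (1 - zt t) ^ L)"
    by (intro prod.cong refl) (simp add: divmod_LN)
  also have "\<dots> = (\<Prod>t<N. (1 - zt t)) ^ L" by (simp add: prod_power_distrib)
  also have "\<dots> = 2 ^ L" using prod_z[OF Npos] by simp
  finally show ?thesis .
qed

lemma zz_sign: "finite A \<Longrightarrow> zz A * (-1) ^ card A = (\<Prod>m\<in>A. - zt (m div L))"
  by (simp add: zz_def prod.distrib[of "\<lambda>_. -1" "\<lambda>m. zt (m div L)", simplified] mult.commute)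

lemma sum_signs_X:
  assumes "X \<subseteq> {..<M}"
  shows "(\<Sum>A\<in>Pow X. zz A * (-1) ^ card A) = (\<Prod>m\<in>X. (1 - zt (m div L)))"
proof -
  have fX: "finite X" using assms finite_subset by blast
  have "(\<Prod>m\<in>X. (1 - zt (m div L))) = (\<Prod>m\<in>X. (- zt (m div L)) + 1)" by simp
  also have "\<dots> = (\<Sum>A\<in>Pow X. (\<Prod>m\<in>A. - zt (m div L)) * (\<Prod>m\<in>X - A. 1))"
    by (rule prod_add[OF fX])
  also have "\<dots> = (\<Sum>A\<in>Pow X. zz A * (-1) ^ card A)"
    using fX by (intro sum.cong refl) (auto simp: zz_sign finite_subset)
  finally show ?thesis by simp
qed

lemma sum_signs: "(\<Sum>A\<in>fock M. zz A * (-1) ^ card A) = 2 ^ L"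
  using sum_signs_X[of "{..<M}"] prod_all by (simp add: fock_def)

lemma sum_signs_not:
  assumes m: "m < M"
  shows "(\<Sum>A\<in>fock M. zz A * (-1) ^ card A * (if m \<in> A then 0 else 1)) = 2 ^ L / (1 - zt (m div L))"
proof -
  have "(\<Sum>A\<in>fock M. zz A * (-1) ^ card A * (if m \<in> A then 0 else 1)) = (\<Sum>A\<in>Pow ({..<M} - {m}). zz A * (-1) ^ card A)"
    unfolding fock_def by (rule sum.mono_neutral_cong_right) auto
  also have "\<dots> = (\<Prod>m\<in>{..<M} - {m}. (1 - zt (m div L)))"
    by (rule sum_signs_X) auto
  also have "\<dots> = 2 ^ L / (1 - zt (m div L))"
  proof -
    have "(\<Prod>m<M. (1 - zt (m div L))) = (1 - zt (m div L)) * (\<Prod>m\<in>{..<M} - {m}. (1 - zt (m div L)))"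
      using m by (intro prod.remove) auto
    then show ?thesis using prod_all z_ne_1[OF Npos, of "m div L"] by (simp add: field_simps)
  qed
  finally show ?thesis .
qed

end


lemma app_mid: "S \<in> fock M \<Longrightarrow> app M mid x S = x S"
  by (simp add: app_def mid_def if01_mult)

lemma mtr_mid: "mtr L mid = 2 ^ L"
  by (simp add: mtr_def mid_def fock_def card_Pow)

lemma card_Pow_without: "k < L \<Longrightarrow> card {S \<in> Pow {..<(L::nat)}. k \<notin> S} = 2 ^ (L - 1)"
proof -
  assume k: "k < L"
  have "{S \<in> Pow {..<L}. k \<notin> S} = Pow ({..<L} - {k})" by auto
  then show ?thesis using k by (simp add: card_Pow)
qed

lemma card_Pow_with: "k < L \<Longrightarrow> card {S \<in> Pow {..<(L::nat)}. k \<in> S} = 2 ^ (L - 1)"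
proof -
  assume k: "k < L"
  have "{S \<in> Pow {..<L}. k \<in> S} = insert k ` Pow ({..<L} - {k})"
  proof
    show "{S \<in> Pow {..<L}. k \<in> S} \<subseteq> insert k ` Pow ({..<L} - {k})"
    proof
      fix S assume "S \<in> {S \<in> Pow {..<L}. k \<in> S}"
      then have "S = insert k (S - {k})" "S - {k} \<in> Pow ({..<L} - {k})" by auto
      then show "S \<in> insert k ` Pow ({..<L} - {k})" by blast
    qed
  qed (use k in auto)
  moreover have "inj_on (insert k) (Pow ({..<L} - {k}))"
    by (rule inj_onI) (metis Diff_iff PowD insert_Diff_if insertI1 subsetD Diff_insert_absorb)
  ultimately show ?thesis using k by (simp add: card_image card_Pow)
qed

lemma h_ac:
  assumes i: "i \<in> {1..L}" and j: "j \<in> {1..L}"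
  shows "mtr L (mmul L (a_h i) (madj (a_h j))) = (if i = j then 2 ^ (L - 1) else 0)"
proof -
  define k where "k = i - 1"
  define l where "l = j - 1"
  have kL: "k < L" and lL: "l < L" using i j by (auto simp: k_def l_def)
  have ij: "(i = j) = (k = l)" using i j by (auto simp: k_def l_def)
  have "mtr L (mmul L (ann k) (madj (ann l))) = (\<Sum>S\<in>fock L. if k \<notin> S \<and> k = l then 1 else 0)"
    unfolding mtr_def
  proof (intro sum.cong refl)
    fix S assume S: "S \<in> fock L"
    have "mmul L (ann k) (madj (ann l)) S S = app L (ann k) (\<lambda>U. madj (ann l) U S) S"
      by (simp add: mmul_def app_def)
    also have "\<dots> = annv k (\<lambda>U. madj (ann l) U S) S" by (rule app_ann[OF kL S])
    also have "\<dots> = (if k \<notin> S \<and> k = l then 1 else 0)"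
      by (auto simp: annv_def madj_def ann_jw)
    finally show "mmul L (ann k) (madj (ann l)) S S = (if k \<notin> S \<and> k = l then 1 else 0)" .
  qed
  also have "\<dots> = (if k = l then of_nat (card {S \<in> Pow {..<L}. k \<notin> S}) else 0)"
    by (auto simp: fock_def sum.If_cases Int_def conj_commute)
  also have "\<dots> = (if i = j then 2 ^ (L - 1) else 0)"
    using card_Pow_without[OF kL] ij by auto
  finally show ?thesis by (simp add: a_h_def k_def l_def)
qed

lemma h_ca:
  assumes i: "i \<in> {1..L}" and j: "j \<in> {1..L}"
  shows "mtr L (mmul L (madj (a_h j)) (a_h i)) = (if i = j then 2 ^ (L - 1) else 0)"
proof -
  define k where "k = i - 1"
  define l where "l = j - 1"
  have kL: "k < L" and lL: "l < L" using i j by (auto simp: k_def l_def)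
  have ij: "(i = j) = (k = l)" using i j by (auto simp: k_def l_def)
  have "mtr L (mmul L (madj (ann l)) (ann k)) = (\<Sum>S\<in>fock L. if k \<in> S \<and> k = l then 1 else 0)"
    unfolding mtr_def
  proof (intro sum.cong refl)
    fix S assume S: "S \<in> fock L"
    have "mmul L (madj (ann l)) (ann k) S S = app L (cre l) (\<lambda>U. ann k U S) S"
      by (simp add: mmul_def app_def cre_def)
    also have "\<dots> = crev l (\<lambda>U. ann k U S) S" by (rule app_cre[OF S])
    also have "\<dots> = (if k \<in> S \<and> k = l then 1 else 0)"
    proof -
      have "k \<in> S \<Longrightarrow> l \<in> S \<Longrightarrow> S - {l} = S - {k} \<Longrightarrow> k = l" by blast
      then show ?thesis by (auto simp: crev_def ann_jw)
    qed
    finally show "mmul L (madj (ann l)) (ann k) S S = (if k \<in> S \<and> k = l then 1 else 0)" .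
  qed
  also have "\<dots> = (if k = l then of_nat (card {S \<in> Pow {..<L}. k \<in> S}) else 0)"
    by (auto simp: fock_def sum.If_cases Int_def conj_commute)
  also have "\<dots> = (if i = j then 2 ^ (L - 1) else 0)"
    using card_Pow_with[OF kL] ij by auto
  finally show ?thesis by (simp add: a_h_def k_def l_def)
qed


context cfg
begin

lemma Wsum:
  assumes t1: "t1 < N" and t2: "t2 < N" and i: "i \<in> {1..L}" and j: "j \<in> {1..L}"
  shows "(\<Sum>m<M. cnj (Wf L N m (t1 * L + (i - 1))) * Wf L N m (t2 * L + (j - 1)) / (1 - zt (m div L)))
       = (if i = j then (if t2 \<le> t1 then 1 / 2 else - (1 / 2)) else 0)"
proof -
  define i1 where "i1 = i - 1"
  define j1 where "j1 = j - 1"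
  have i1: "i1 < L" and j1: "j1 < L" using i j by (auto simp: i1_def j1_def)
  have ij: "(i = j) = (i1 = j1)" using i j by (auto simp: i1_def j1_def)
  define s where "s = complex_of_real (sqrt (real N))"
  have "(\<Sum>m<M. cnj (Wf L N m (t1 * L + i1)) * Wf L N m (t2 * L + j1) / (1 - zt (m div L)))
      = (\<Sum>n<N. \<Sum>r<L. cnj (Wf L N (n * L + r) (t1 * L + i1)) * Wf L N (n * L + r) (t2 * L + j1) / (1 - zt ((n * L + r) div L)))"
    by (rule sum_split_LN[OF Lpos])
  also have "\<dots> = (\<Sum>n<N. \<Sum>r<L. if r = i1 then (if i1 = j1 then cnj (cis (th N n * real t1) / s) * (cis (th N n * real t2) / s) / (1 - zt n) else 0) else 0)"
    by (intro sum.cong refl) (auto simp: Wf_at i1 j1 divmod_LN s_def)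
  also have "\<dots> = (\<Sum>n<N. if i1 = j1 then cnj (cis (th N n * real t1) / s) * (cis (th N n * real t2) / s) / (1 - zt n) else 0)"
    using i1 by simp
  also have "\<dots> = (if i1 = j1 then (\<Sum>n<N. cis (th N n * real_of_int (int t2 - int t1)) / (1 - zt n)) / of_nat N else 0)"
  proof -
    have "cnj (cis (th N n * real t1) / s) * (cis (th N n * real t2) / s) = cis (th N n * real_of_int (int t2 - int t1)) / of_nat N" for n
    proof -
      have "cnj (cis (th N n * real t1) / s) * (cis (th N n * real t2) / s) = cnj (cis (th N n * real t1)) / s * (cis (th N n * real t2) / s)"
        by (simp add: s_def)
      also have "\<dots> = cnj (cis (th N n * real t1)) * cis (th N n * real t2) / of_nat N"
        unfolding s_def by (rule div_sqrtN)
      also have "cnj (cis (th N n * real t1)) * cis (th N n * real t2) = cis (th N n * real_of_int (int t2 - int t1))"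
        unfolding cis_cnj cis_mult by (intro arg_cong[where f=cis]) (simp add: algebra_simps)
      finally show ?thesis .
    qed
    then show ?thesis by (simp add: sum_divide_distrib ac_simps)
  qed
  also have "\<dots> = (if i = j then (if t2 \<le> t1 then 1 / 2 else - (1 / 2)) else 0)"
    using H_sum[OF Npos t1 t2] ij Npos by auto
  finally show ?thesis by (simp add: i1_def j1_def)
qed

lemma big_ac:
  assumes t1: "t1 < N" and t2: "t2 < N" and i: "i \<in> {1..L}" and j: "j \<in> {1..L}"
  shows "mtr M (mmul M (mmul M (PE L N \<epsilon>) (a_H L t1 i)) (madj (a_H L t2 j)))
       = (if i = j then (if t2 \<le> t1 then 2 ^ L / 2 else - (2 ^ L / 2)) else 0)"
proof -
  define k1 where "k1 = t1 * L + (i - 1)"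
  define k2 where "k2 = t2 * L + (j - 1)"
  have k1: "k1 < M" and k2: "k2 < M" using aH_idx t1 t2 i j by (auto simp: k1_def k2_def)
  have "mmul M (mmul M (PE L N \<epsilon>) (a_H L t1 i)) (madj (a_H L t2 j)) = mmul M (PE L N \<epsilon>) (mmul M (ann k1) (cre k2))"
    by (simp add: mmul_assoc a_H_def cre_def k1_def k2_def)
  then have "mtr M (mmul M (mmul M (PE L N \<epsilon>) (a_H L t1 i)) (madj (a_H L t2 j)))
      = (\<Sum>A\<in>fock M. zz A * (-1) ^ card A * ip M (F.v A) (app M (mmul M (ann k1) (cre k2)) (F.v A)))"
    by (simp add: trace_formula)
  also have "\<dots> = (\<Sum>A\<in>fock M. zz A * (-1) ^ card A * (\<Sum>m<M. cnj (Wf L N m k1) * Wf L N m k2 * (if m \<in> A then 0 else 1)))"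
  proof (intro sum.cong refl arg_cong2[where f="(*)"])
    fix A assume A: "A \<in> fock M"
    have "ip M (F.v A) (app M (mmul M (ann k1) (cre k2)) (F.v A)) = ip M (F.v A) (\<lambda>S. annv k1 (crev k2 (F.v A)) S)"
    proof (rule ip_cong)
      fix S assume S: "S \<in> fock M"
      have "app M (mmul M (ann k1) (cre k2)) (F.v A) S = app M (ann k1) (app M (cre k2) (F.v A)) S"
        by (rule app_mmul)
      also have "\<dots> = annv k1 (app M (cre k2) (F.v A)) S" by (rule app_ann[OF k1 S])
      also have "\<dots> = annv k1 (crev k2 (F.v A)) S"
        by (rule annv_cong[OF k1 S]) (rule app_cre)
      finally show "app M (mmul M (ann k1) (cre k2)) (F.v A) S = annv k1 (crev k2 (F.v A)) S" .
    qed
    also have "\<dots> = (\<Sum>m<M. cnj (Wf L N m k1) * Wf L N m k2 * (if m \<in> A then 0 else 1))"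
      by (rule F.ip_ac[OF A k1 k2])
    finally show "ip M (F.v A) (app M (mmul M (ann k1) (cre k2)) (F.v A)) = (\<Sum>m<M. cnj (Wf L N m k1) * Wf L N m k2 * (if m \<in> A then 0 else 1))" .
  qed
  also have "\<dots> = (\<Sum>m<M. cnj (Wf L N m k1) * Wf L N m k2 * (\<Sum>A\<in>fock M. zz A * (-1) ^ card A * (if m \<in> A then 0 else 1)))"
    by (simp add: sum_distrib_left sum_distrib_right algebra_simps) (rule sum.swap)
  also have "\<dots> = (\<Sum>m<M. cnj (Wf L N m k1) * Wf L N m k2 * (2 ^ L / (1 - zt (m div L))))"
    by (intro sum.cong refl) (simp add: sum_signs_not)
  also have "\<dots> = 2 ^ L * (\<Sum>m<M. cnj (Wf L N m k1) * Wf L N m k2 / (1 - zt (m div L)))"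
    by (simp add: sum_distrib_left algebra_simps)
  also have "\<dots> = 2 ^ L * (if i = j then (if t2 \<le> t1 then 1 / 2 else - (1 / 2)) else 0)"
    unfolding k1_def k2_def by (simp only: Wsum[OF t1 t2 i j])
  finally show ?thesis by simp
qed

lemma big_aa:
  assumes t1: "t1 < N" and t2: "t2 < N" and i: "i \<in> {1..L}" and j: "j \<in> {1..L}"
  shows "mtr M (mmul M (mmul M (PE L N \<epsilon>) (a_H L t1 i)) (a_H L t2 j)) = 0"
proof -
  define k1 where "k1 = t1 * L + (i - 1)"
  define k2 where "k2 = t2 * L + (j - 1)"
  have k1: "k1 < M" and k2: "k2 < M" using aH_idx t1 t2 i j by (auto simp: k1_def k2_def)
  have "mmul M (mmul M (PE L N \<epsilon>) (a_H L t1 i)) (a_H L t2 j) = mmul M (PE L N \<epsilon>) (mmul M (ann k1) (ann k2))"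
    by (simp add: mmul_assoc a_H_def k1_def k2_def)
  then have "mtr M (mmul M (mmul M (PE L N \<epsilon>) (a_H L t1 i)) (a_H L t2 j))
      = (\<Sum>A\<in>fock M. zz A * (-1) ^ card A * ip M (F.v A) (app M (mmul M (ann k1) (ann k2)) (F.v A)))"
    by (simp add: trace_formula)
  also have "\<dots> = 0"
  proof (intro sum.neutral ballI)
    fix A assume A: "A \<in> fock M"
    have "ip M (F.v A) (app M (mmul M (ann k1) (ann k2)) (F.v A)) = ip M (F.v A) (\<lambda>S. annv k1 (annv k2 (F.v A)) S)"
    proof (rule ip_cong)
      fix S assume S: "S \<in> fock M"
      have "app M (mmul M (ann k1) (ann k2)) (F.v A) S = app M (ann k1) (app M (ann k2) (F.v A)) S"
        by (rule app_mmul)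
      also have "\<dots> = annv k1 (app M (ann k2) (F.v A)) S" by (rule app_ann[OF k1 S])
      also have "\<dots> = annv k1 (annv k2 (F.v A)) S"
        by (rule annv_cong[OF k1 S]) (rule app_ann[OF k2])
      finally show "app M (mmul M (ann k1) (ann k2)) (F.v A) S = annv k1 (annv k2 (F.v A)) S" .
    qed
    also have "\<dots> = 0" by (rule F.ip_aa[OF A])
    finally show "zz A * (-1) ^ card A * ip M (F.v A) (app M (mmul M (ann k1) (ann k2)) (F.v A)) = 0" by simp
  qed
  finally show ?thesis .
qed

lemma big_cc:
  assumes t1: "t1 < N" and t2: "t2 < N" and i: "i \<in> {1..L}" and j: "j \<in> {1..L}"
  shows "mtr M (mmul M (mmul M (PE L N \<epsilon>) (madj (a_H L t1 i))) (madj (a_H L t2 j))) = 0"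
proof -
  define k1 where "k1 = t1 * L + (i - 1)"
  define k2 where "k2 = t2 * L + (j - 1)"
  have "mmul M (mmul M (PE L N \<epsilon>) (madj (a_H L t1 i))) (madj (a_H L t2 j)) = mmul M (PE L N \<epsilon>) (mmul M (cre k1) (cre k2))"
    by (simp add: mmul_assoc a_H_def cre_def k1_def k2_def)
  then have "mtr M (mmul M (mmul M (PE L N \<epsilon>) (madj (a_H L t1 i))) (madj (a_H L t2 j)))
      = (\<Sum>A\<in>fock M. zz A * (-1) ^ card A * ip M (F.v A) (app M (mmul M (cre k1) (cre k2)) (F.v A)))"
    by (simp add: trace_formula)
  also have "\<dots> = 0"
  proof (intro sum.neutral ballI)
    fix A assume A: "A \<in> fock M"
    have "ip M (F.v A) (app M (mmul M (cre k1) (cre k2)) (F.v A)) = ip M (F.v A) (\<lambda>S. crev k1 (crev k2 (F.v A)) S)"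
    proof (rule ip_cong)
      fix S assume S: "S \<in> fock M"
      have "app M (mmul M (cre k1) (cre k2)) (F.v A) S = app M (cre k1) (app M (cre k2) (F.v A)) S"
        by (rule app_mmul)
      also have "\<dots> = crev k1 (app M (cre k2) (F.v A)) S" by (rule app_cre[OF S])
      also have "\<dots> = crev k1 (crev k2 (F.v A)) S"
        by (rule crev_cong[OF S]) (rule app_cre)
      finally show "app M (mmul M (cre k1) (cre k2)) (F.v A) S = crev k1 (crev k2 (F.v A)) S" .
    qed
    also have "\<dots> = 0" by (rule F.ip_cc[OF A])
    finally show "zz A * (-1) ^ card A * ip M (F.v A) (app M (mmul M (cre k1) (cre k2)) (F.v A)) = 0" by simp
  qed
  finally show ?thesis .
qed

lemma big_one: "mtr M (PE L N \<epsilon>) = 2 ^ L"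
proof -
  have "mtr M (PE L N \<epsilon>) = mtr M (mmul M (PE L N \<epsilon>) mid)"
    unfolding mtr_def mmul_def by (intro sum.cong refl) (simp add: mid_def if01_mult[simplified mult.commute])
  also have "\<dots> = (\<Sum>A\<in>fock M. zz A * (-1) ^ card A * ip M (F.v A) (app M mid (F.v A)))"
    by (rule trace_formula)
  also have "\<dots> = (\<Sum>A\<in>fock M. zz A * (-1) ^ card A)"
  proof (intro sum.cong refl)
    fix A assume A: "A \<in> fock M"
    have "ip M (F.v A) (app M mid (F.v A)) = ip M (F.v A) (F.v A)"
      by (rule ip_cong) (rule app_mid)
    also have "\<dots> = 1" using F.v_ortho[OF A A] by simp
    finally show "zz A * (-1) ^ card A * ip M (F.v A) (app M mid (F.v A)) = zz A * (-1) ^ card A" by simp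
  qed
  also have "\<dots> = 2 ^ L" by (rule sum_signs)
  finally show ?thesis .
qed

end

theorem theorem1:
  fixes L N :: nat and \<epsilon> :: real
  assumes "L \<ge> 1" and "N \<ge> 1" and "\<epsilon> > 0"
  shows "mtr (L * N) (PE L N \<epsilon>) = mtr L mid
    \<and> (\<forall>t1<N. \<forall>t2<N. \<forall>i\<in>{1..L}. \<forall>j\<in>{1..L}.
         mtr (L * N) (mmul (L * N) (mmul (L * N) (PE L N \<epsilon>) (a_H L t1 i)) (madj (a_H L t2 j)))
         = (if t2 \<le> t1 then mtr L (mmul L (a_h i) (madj (a_h j)))
            else - mtr L (mmul L (madj (a_h j)) (a_h i))))
    \<and> (\<forall>t1<N. \<forall>t2<N. \<forall>i\<in>{1..L}. \<forall>j\<in>{1..L}.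
         mtr (L * N) (mmul (L * N) (mmul (L * N) (PE L N \<epsilon>) (a_H L t1 i)) (a_H L t2 j)) = 0
       \<and> mtr (L * N) (mmul (L * N) (mmul (L * N) (PE L N \<epsilon>) (madj (a_H L t1 i))) (madj (a_H L t2 j))) = 0)"
proof -
  interpret cfg L N \<epsilon> using assms by unfold_locales auto
  have pw: "(2::complex) ^ L / 2 = 2 ^ (L - 1)"
  proof -
    have "L = Suc (L - 1)" using assms by simp
    then have "(2::complex) ^ L = 2 * 2 ^ (L - 1)" by (metis power_Suc)
    then show ?thesis by simp
  qed
  have A: "mtr (L * N) (PE L N \<epsilon>) = mtr L mid"
    using big_one mtr_mid by simp
  have B: "mtr (L * N) (mmul (L * N) (mmul (L * N) (PE L N \<epsilon>) (a_H L t1 i)) (madj (a_H L t2 j)))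
         = (if t2 \<le> t1 then mtr L (mmul L (a_h i) (madj (a_h j)))
            else - mtr L (mmul L (madj (a_h j)) (a_h i)))"
    if "t1 < N" "t2 < N" "i \<in> {1..L}" "j \<in> {1..L}" for t1 t2 i j
    using big_ac[OF that] h_ac[OF that(3,4)] h_ca[OF that(3,4)] pw by simp
  show ?thesis using A B big_aa big_cc by blast
qed


end
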